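(* Let $0<q<1$, let $\pi=\pi_+\oplus\pi_-$ be the spin representation of $\mathcal{A}(S^2_q)$ on $\mathcal{H}=\mathcal{H}_+\oplus\mathcal{H}_-$, and let $D|l,m\rangle_\pm=(l+\tfrac12)|l,m\rangle_\mp$. Let $B$ be the $*$-algebra generated by $\pi(\mathcal{A}(S^2_q))$ and the commutators $[D,\pi(x)]$, $x\in\mathcal{A}(S^2_q)$. Then $B\subset\mathcal{B}(\mathcal{H})$ (all these commutators are bounded), and $(\mathcal{A}(S^2_q),\mathcal{H},D)$ is a regular spectral triple of metric dimension $2$.
   Context: $\mathcal{A}(S^2_q)$ is the unital $*$-algebra generated by $a,a^*$ and $b=b^*$ with relations $ba=q^2ab$, $a^*a+b^2=1$, $q^4aa^*+b^2=q^4$. $\mathcal{H}_\pm$ each have orthonormal basis $|l,m\rangle_\pm$, $l\in\mathbb{N}+\tfrac12$, $m=-l,-l+1,\dots,l$ (vectors with indices out of range are $0$). With $[x]=(q^x-q^{-x})/(q-q^{-1})$: $\pi_\pm(a)|l,m\rangle_\pm=q^{m-l-\frac12}\frac{\sqrt{[l+m+1][l+m+2]}}{[2l+2]}|l+1,m+1\rangle_\pm-q^{m+l+\frac12}\frac{\sqrt{[l-m-1][l-m]}}{[2l]}|l-1,m+1\rangle_\pm\pm\frac{(1+q^2)q^{m-\frac12}}{[2l][2l+2]}\sqrt{[l+m+1][l-m]}\,|l,m+1\rangle_\pm$, $\pi_\pm(b)|l,m\rangle_\pm=-q^{m+1}\frac{\sqrt{[l+m+1][l-m+1]}}{[2l+2]}|l+1,m\rangle_\pm-q^{m+1}\frac{\sqrt{[l+m][l-m]}}{[2l]}|l-1,m\rangle_\pm\pm\frac{[l-m+1][l+m]-q^2[l-m][l+m+1]}{[2l][2l+2]}|l,m\rangle_\pm$;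 these extend to bounded $*$-representations. A spectral triple is regular if $A\cup[D,A]\subset\bigcap_j\mathrm{dom}\,\delta^j$, $\delta(T)=[|D|,T]$. Metric dimension $d$ means the singular values of $|D|^{-1}$ are of order $n^{-1/d}$ as $n\to\infty$. *)

theory Defs
  imports "HOL-Analysis.Analysis"
begin

text \<open>Basis index (s, l, m) of H = H_+ (+) H_-: s = True means H_+, s = False means H_-.
  Only valid indices (l in N + 1/2, m in {-l, -l+1, ..., l}) correspond to basis vectors;
  all other indices denote the zero vector.\<close>

type_synonym idx = "bool \<times> real \<times> real"
type_synonym mat = "idx \<Rightarrow> idx \<Rightarrow> complex"
type_synonym vec = "idx \<Rightarrow> complex"

definition valid :: "idx \<Rightarrow> bool" where
  "valid i = (case i of (s, l, m) \<Rightarrow>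
     (\<exists>n::nat. l = real n + 1/2) \<and> (\<exists>k::int. m = l - of_int k) \<and> - l \<le> m \<and> m \<le> l)"

definition qnum :: "real \<Rightarrow> real \<Rightarrow> real" where
  "qnum q x = (q powr x - q powr (- x)) / (q - 1 / q)"

definition sgnb :: "bool \<Rightarrow> real" where
  "sgnb s = (if s then 1 else -1)"

text \<open>Matrix coefficients: M i j is the coefficient of basis vector i in M applied to basis vector j.\<close>

definition piA :: "real \<Rightarrow> mat" where
  "piA q i j = (case i of (s', l', m') \<Rightarrow> case j of (s, l, m) \<Rightarrow>
     if valid i \<and> valid j \<and> s' = s then complex_of_real
       (if l' = l + 1 \<and> m' = m + 1 then
          q powr (m - l - 1/2) * sqrt (qnum q (l + m + 1) * qnum q (l + m + 2)) / qnum q (2*l + 2)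
        else if l' = l - 1 \<and> m' = m + 1 then
          - (q powr (m + l + 1/2) * sqrt (qnum q (l - m - 1) * qnum q (l - m)) / qnum q (2*l))
        else if l' = l \<and> m' = m + 1 then
          sgnb s * ((1 + q^2) * q powr (m - 1/2) / (qnum q (2*l) * qnum q (2*l + 2)))
            * sqrt (qnum q (l + m + 1) * qnum q (l - m))
        else 0)
     else 0)"

definition piB :: "real \<Rightarrow> mat" where
  "piB q i j = (case i of (s', l', m') \<Rightarrow> case j of (s, l, m) \<Rightarrow>
     if valid i \<and> valid j \<and> s' = s \<and> m' = m then complex_of_real
       (if l' = l + 1 then
          - (q powr (m + 1) * sqrt (qnum q (l + m + 1) * qnum q (l - m + 1)) / qnum q (2*l + 2))
        else if l' = l - 1 then
          - (q powr (m + 1) * sqrt (qnum q (l + m) * qnum q (l - m)) / qnum q (2*l))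
        else if l' = l then
          sgnb s * ((qnum q (l - m + 1) * qnum q (l + m) - q^2 * qnum q (l - m) * qnum q (l + m + 1))
            / (qnum q (2*l) * qnum q (2*l + 2)))
        else 0)
     else 0)"

definition Dmat :: mat where
  "Dmat i j = (case i of (s', l', m') \<Rightarrow> case j of (s, l, m) \<Rightarrow>
     if valid i \<and> valid j \<and> l' = l \<and> m' = m \<and> s' \<noteq> s then complex_of_real (l + 1/2) else 0)"

definition absDmat :: mat where
  "absDmat i j = (case j of (s, l, m) \<Rightarrow>
     if valid j \<and> i = j then complex_of_real (l + 1/2) else 0)"

definition mmult :: "mat \<Rightarrow> mat \<Rightarrow> mat" where
  "mmult A B i k = (\<Sum>\<^sub>\<infinity>j. A i j * B j k)"

definition madd :: "mat \<Rightarrow> mat \<Rightarrow> mat" where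
  "madd A B i k = A i k + B i k"

definition msmult :: "complex \<Rightarrow> mat \<Rightarrow> mat" where
  "msmult c A i k = c * A i k"

definition madj :: "mat \<Rightarrow> mat" where
  "madj A i k = cnj (A k i)"

definition mone :: mat where
  "mone i k = (if i = k \<and> valid i then 1 else 0)"

definition mcomm :: "mat \<Rightarrow> mat \<Rightarrow> mat" where
  "mcomm A B i k = mmult A B i k - mmult B A i k"

inductive_set alg_gen :: "mat set \<Rightarrow> mat set" for G :: "mat set" where
  gen: "T \<in> G \<Longrightarrow> T \<in> alg_gen G"
| one: "mone \<in> alg_gen G"
| add: "S \<in> alg_gen G \<Longrightarrow> T \<in> alg_gen G \<Longrightarrow> madd S T \<in> alg_gen G"
| smult: "T \<in> alg_gen G \<Longrightarrow> msmult c T \<in> alg_gen G"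
| mult: "S \<in> alg_gen G \<Longrightarrow> T \<in> alg_gen G \<Longrightarrow> mmult S T \<in> alg_gen G"

definition star_alg_gen :: "mat set \<Rightarrow> mat set" where
  "star_alg_gen G = alg_gen (G \<union> madj ` G)"

definition piAlg :: "real \<Rightarrow> mat set" where
  "piAlg q = alg_gen {piA q, madj (piA q), piB q}"

definition commD :: "real \<Rightarrow> mat set" where
  "commD q = {mcomm Dmat T | T. T \<in> piAlg q}"

definition Balg :: "real \<Rightarrow> mat set" where
  "Balg q = star_alg_gen (piAlg q \<union> commD q)"

definition finsupp_vec :: "vec \<Rightarrow> bool" where
  "finsupp_vec v = (finite {i. v i \<noteq> 0} \<and> (\<forall>i. v i \<noteq> 0 \<longrightarrow> valid i))"

definition mapply :: "mat \<Rightarrow> vec \<Rightarrow> vec" where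
  "mapply M v i = (\<Sum>\<^sub>\<infinity>j. M i j * v j)"

definition vnorm2 :: "vec \<Rightarrow> real" where
  "vnorm2 v = (\<Sum>\<^sub>\<infinity>i. (cmod (v i))^2)"

text \<open>The operator defined by M on the dense subspace of finitely supported vectors is
  bounded (hence extends to a bounded operator on H).\<close>
definition mbounded :: "mat \<Rightarrow> bool" where
  "mbounded M = (\<exists>C. \<forall>v. finsupp_vec v \<longrightarrow>
      (\<lambda>i. (cmod (mapply M v i))^2) summable_on UNIV \<and> vnorm2 (mapply M v) \<le> C * vnorm2 v)"

definition hermitian :: "mat \<Rightarrow> bool" where
  "hermitian M = (\<forall>i j. M i j = cnj (M j i))"

definition delta :: "mat \<Rightarrow> mat" where
  "delta T = mcomm absDmat T"

definition in_dom_delta_pow :: "nat \<Rightarrow> mat \<Rightarrow> bool" where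
  "in_dom_delta_pow j T = (\<forall>i\<le>j. mbounded ((delta ^^ i) T))"

text \<open>Singular values of |D|^{-1}: |D|^{-1} is diagonal with positive entries 1/(l+1/2),
  so its n-th singular value (n = 0,1,2,...) is the n-th term of the decreasing rearrangement
  (with multiplicity) of the diagonal entries.\<close>
definition invabsD_diag :: "idx \<Rightarrow> real" where
  "invabsD_diag i = 1 / (fst (snd i) + 1/2)"

definition sing_val_invabsD :: "nat \<Rightarrow> real" where
  "sing_val_invabsD n = Inf {t. 0 \<le> t \<and> finite {i. valid i \<and> invabsD_diag i > t}
                                   \<and> card {i. valid i \<and> invabsD_diag i > t} \<le> n}"

definition spectral_triple :: "real \<Rightarrow> bool" where
  "spectral_triple q =
     ((\<forall>T\<in>piAlg q. mbounded T)
      \<and> hermitian Dmat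
      \<and> sing_val_invabsD \<longlonglongrightarrow> 0
      \<and> (\<forall>T\<in>piAlg q. mbounded (mcomm Dmat T)))"

definition regular :: "real \<Rightarrow> bool" where
  "regular q = (\<forall>T \<in> piAlg q \<union> commD q. \<forall>j. in_dom_delta_pow j T)"

definition metric_dimension :: "real \<Rightarrow> bool" where
  "metric_dimension d = (\<exists>c C. 0 < c \<and> 0 < C \<and> (\<forall>n::nat. n \<ge> 1 \<longrightarrow>
       c * real n powr (- 1 / d) \<le> sing_val_invabsD n \<and> sing_val_invabsD n \<le> C * real n powr (- 1 / d)))"

end

theory Submission
  imports Defs
begin

definition lv :: "idx \<Rightarrow> real" where "lv i = fst (snd i)"
definition mv :: "idx \<Rightarrow> real" where "mv i = snd (snd i)"

definition band :: "real \<Rightarrow> mat \<Rightarrow> bool" where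
  "band L M = (\<forall>i k. M i k \<noteq> 0 \<longrightarrow> valid i \<and> valid k \<and> \<bar>lv i - lv k\<bar> \<le> L \<and> \<bar>mv i - mv k\<bar> \<le> L)"

definition bnd :: "real \<Rightarrow> mat \<Rightarrow> bool" where
  "bnd C M = (\<forall>i k. cmod (M i k) \<le> C)"

definition boxI :: "real \<Rightarrow> (bool \<times> int \<times> int) set" where
  "boxI L = UNIV \<times> {-\<lceil>L\<rceil>..\<lceil>L\<rceil>} \<times> {-\<lceil>L\<rceil>..\<lceil>L\<rceil>}"

definition nbs :: "real \<Rightarrow> idx \<Rightarrow> idx set" where
  "nbs L i = (\<lambda>(s,a,b). (s, lv i + of_int a, mv i + of_int b)) ` boxI L"

definition KB :: "real \<Rightarrow> nat" where "KB L = card (boxI L)"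

lemma finite_boxI: "finite (boxI L)"
  unfolding boxI_def by simp

lemma finite_nbs: "finite (nbs L i)"
  unfolding nbs_def using finite_boxI by simp

lemma card_nbs: "card (nbs L i) \<le> KB L"
  unfolding nbs_def KB_def using card_image_le finite_boxI by blast

lemma valid_l: "valid i \<Longrightarrow> \<exists>n::nat. lv i = real n + 1/2"
  unfolding valid_def lv_def by (auto split: prod.splits)

lemma valid_lm: "valid i \<Longrightarrow> \<exists>k::int. mv i = lv i - of_int k"
  unfolding valid_def lv_def mv_def by (auto split: prod.splits)

lemma valid_bounds: "valid i \<Longrightarrow> - lv i \<le> mv i \<and> mv i \<le> lv i"
  unfolding valid_def lv_def mv_def by (auto split: prod.splits)

lemma valid_diff_int:
  assumes "valid i" "valid k"
  shows "\<exists>a::int. lv k = lv i + of_int a" "\<exists>b::int. mv k = mv i + of_int b"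
proof -
  obtain n1 :: nat where n1: "lv i = real n1 + 1/2" using valid_l[OF assms(1)] by blast
  obtain n2 :: nat where n2: "lv k = real n2 + 1/2" using valid_l[OF assms(2)] by blast
  obtain k1 :: int where k1: "mv i = lv i - of_int k1" using valid_lm[OF assms(1)] by blast
  obtain k2 :: int where k2: "mv k = lv k - of_int k2" using valid_lm[OF assms(2)] by blast
  have "lv k = lv i + of_int (int n2 - int n1)" using n1 n2 by simp
  then show "\<exists>a::int. lv k = lv i + of_int a" by blast
  have "mv k = mv i + of_int ((int n2 - int n1) - k2 + k1)" using n1 n2 k1 k2 by simp
  then show "\<exists>b::int. mv k = mv i + of_int b" by blast
qed

lemma in_nbs:
  assumes "valid i" "valid k" "\<bar>lv i - lv k\<bar> \<le> L" "\<bar>mv i - mv k\<bar> \<le> L"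
  shows "k \<in> nbs L i"
proof -
  obtain a :: int where a: "lv k = lv i + of_int a" using valid_diff_int[OF assms(1,2)] by blast
  obtain b :: int where b: "mv k = mv i + of_int b" using valid_diff_int[OF assms(1,2)] by blast
  have "of_int \<bar>a\<bar> \<le> L" using a assms(3) by simp
  then have "\<lceil>of_int \<bar>a\<bar> :: real\<rceil> \<le> \<lceil>L\<rceil>" by (rule ceiling_mono)
  then have "\<bar>a\<bar> \<le> \<lceil>L\<rceil>" by (simp only: ceiling_of_int)
  moreover have "of_int \<bar>b\<bar> \<le> L" using b assms(4) by simp
  then have "\<lceil>of_int \<bar>b\<bar> :: real\<rceil> \<le> \<lceil>L\<rceil>" by (rule ceiling_mono)
  then have "\<bar>b\<bar> \<le> \<lceil>L\<rceil>" by (simp only: ceiling_of_int)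
  ultimately have "(fst k, a, b) \<in> boxI L" unfolding boxI_def by auto
  moreover have "k = (\<lambda>(s,a,b). (s, lv i + of_int a, mv i + of_int b)) (fst k, a, b)"
    using a b unfolding lv_def mv_def by (cases k) auto
  ultimately show ?thesis unfolding nbs_def by blast
qed

lemma bandD: assumes "band L M" "M i k \<noteq> 0"
  shows "valid i" "valid k" "\<bar>lv i - lv k\<bar> \<le> L" "\<bar>mv i - mv k\<bar> \<le> L"
  using assms unfolding band_def by blast+

lemma band_row: assumes "band L M" "M i j \<noteq> 0" shows "j \<in> nbs L i"
proof -
  have "valid i" "valid j" "\<bar>lv i - lv j\<bar> \<le> L" "\<bar>mv i - mv j\<bar> \<le> L"
    using assms unfolding band_def by blast+
  then show ?thesis by (rule in_nbs)
qed

lemma band_col: assumes "band L M" "M j k \<noteq> 0" shows "j \<in> nbs L k"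
proof -
  have "valid j" "valid k" "\<bar>lv j - lv k\<bar> \<le> L" "\<bar>mv j - mv k\<bar> \<le> L"
    using assms unfolding band_def by blast+
  then have "valid k" "valid j" "\<bar>lv k - lv j\<bar> \<le> L" "\<bar>mv k - mv j\<bar> \<le> L"
    by (simp_all add: abs_minus_commute)
  then show ?thesis by (rule in_nbs)
qed

lemma infsum_fin:
  fixes f :: "'a \<Rightarrow> 'b::{comm_monoid_add, t2_space}"
  assumes "finite F" "\<And>x. x \<notin> F \<Longrightarrow> f x = 0"
  shows "infsum f UNIV = sum f F"
proof -
  have "infsum f UNIV = infsum f F"
    by (rule infsum_cong_neutral) (use assms in auto)
  then show ?thesis using assms(1) by simp
qed

lemma summable_fin:
  fixes f :: "'a \<Rightarrow> 'b::{comm_monoid_add, topological_space}"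
  assumes "finite F" "\<And>x. x \<notin> F \<Longrightarrow> f x = 0"
  shows "f summable_on UNIV"
proof -
  have "f summable_on UNIV \<longleftrightarrow> f summable_on F"
    by (rule summable_on_cong_neutral) (use assms in auto)
  then show ?thesis using assms(1) by simp
qed

lemma mmult_row: assumes "band L M" shows "mmult M N i k = (\<Sum>j\<in>nbs L i. M i j * N j k)"
  unfolding mmult_def
proof (rule infsum_fin[OF finite_nbs])
  fix j assume "j \<notin> nbs L i"
  with assms show "M i j * N j k = 0" using band_row[of L M i j] by auto
qed

lemma mmult_col: assumes "band L N" shows "mmult M N i k = (\<Sum>j\<in>nbs L k. M i j * N j k)"
  unfolding mmult_def
proof (rule infsum_fin[OF finite_nbs])
  fix j assume "j \<notin> nbs L k"
  with assms show "M i j * N j k = 0" using band_col[of L N j k] by auto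
qed

lemma mmult_band:
  assumes "band L1 M" "band L2 N"
  shows "band (L1 + L2) (mmult M N)"
  unfolding band_def
proof (intro allI impI)
  fix i k assume "mmult M N i k \<noteq> 0"
  then have "(\<Sum>j\<in>nbs L1 i. M i j * N j k) \<noteq> 0" using mmult_row[OF assms(1)] by simp
  then obtain j where "M i j * N j k \<noteq> 0" by (meson sum.neutral)
  then have "M i j \<noteq> 0" "N j k \<noteq> 0" by auto
  then have h1: "valid i" "valid j" "\<bar>lv i - lv j\<bar> \<le> L1" "\<bar>mv i - mv j\<bar> \<le> L1"
    and h2: "valid k" "\<bar>lv j - lv k\<bar> \<le> L2" "\<bar>mv j - mv k\<bar> \<le> L2"
    using assms unfolding band_def by blast+
  show "valid i \<and> valid k \<and> \<bar>lv i - lv k\<bar> \<le> L1 + L2 \<and> \<bar>mv i - mv k\<bar> \<le> L1 + L2"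
    using h1 h2 by linarith
qed

lemma bndD: "bnd C M \<Longrightarrow> cmod (M i k) \<le> C"
  unfolding bnd_def by blast

lemma bnd_nonneg: "bnd C M \<Longrightarrow> 0 \<le> C"
  unfolding bnd_def by (meson norm_ge_zero order_trans)

lemma mmult_bnd:
  assumes "band L M" "bnd C1 M" "bnd C2 N"
  shows "bnd (real (KB L) * (C1 * C2)) (mmult M N)"
  unfolding bnd_def
proof (intro allI)
  fix i k
  have "cmod (mmult M N i k) = cmod (\<Sum>j\<in>nbs L i. M i j * N j k)" using mmult_row[OF assms(1)] by simp
  also have "\<dots> \<le> (\<Sum>j\<in>nbs L i. cmod (M i j * N j k))" by (rule norm_sum)
  also have "\<dots> \<le> of_nat (card (nbs L i)) * (C1 * C2)"
  proof (rule sum_bounded_above)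
    fix j
    show "cmod (M i j * N j k) \<le> C1 * C2" unfolding norm_mult
      using assms(2,3) unfolding bnd_def by (meson mult_mono norm_ge_zero order_trans)
  qed
  also have "\<dots> \<le> real (KB L) * (C1 * C2)"
    using card_nbs bnd_nonneg[OF assms(2)] bnd_nonneg[OF assms(3)]
    by (simp add: mult_right_mono)
  finally show "cmod (mmult M N i k) \<le> real (KB L) * (C1 * C2)" .
qed

definition good :: "mat \<Rightarrow> bool" where
  "good M = (\<exists>L C. band L M \<and> bnd C M)"

lemma band_mono: "band L M \<Longrightarrow> L \<le> L' \<Longrightarrow> band L' M"
  unfolding band_def by force

lemma bnd_mono: "bnd C M \<Longrightarrow> C \<le> C' \<Longrightarrow> bnd C' M"
  unfolding bnd_def by (meson order_trans)

lemma good_mmult: "good M \<Longrightarrow> good N \<Longrightarrow> good (mmult M N)"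
  unfolding good_def using mmult_band mmult_bnd by blast

lemma good_madd: assumes "good M" "good N" shows "good (madd M N)"
proof -
  obtain L1 C1 L2 C2 where h: "band L1 M" "bnd C1 M" "band L2 N" "bnd C2 N"
    using assms unfolding good_def by blast
  have "band (max L1 L2) (madd M N)" unfolding band_def
  proof (intro allI impI)
    fix i k assume "madd M N i k \<noteq> 0"
    then have "M i k \<noteq> 0 \<or> N i k \<noteq> 0" unfolding madd_def by auto
    then show "valid i \<and> valid k \<and> \<bar>lv i - lv k\<bar> \<le> max L1 L2 \<and> \<bar>mv i - mv k\<bar> \<le> max L1 L2"
    proof
      assume "M i k \<noteq> 0"
      from bandD[OF h(1) this] show ?thesis by linarith
    next
      assume "N i k \<noteq> 0"
      from bandD[OF h(3) this] show ?thesis by linarith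
    qed
  qed
  moreover have "bnd (C1 + C2) (madd M N)" unfolding bnd_def
  proof (intro allI)
    fix i k
    have "cmod (madd M N i k) \<le> cmod (M i k) + cmod (N i k)" unfolding madd_def by (rule norm_triangle_ineq)
    also have "\<dots> \<le> C1 + C2" using bndD[OF h(2), of i k] bndD[OF h(4), of i k] by linarith
    finally show "cmod (madd M N i k) \<le> C1 + C2" .
  qed
  ultimately show ?thesis unfolding good_def by blast
qed

lemma good_msmult: assumes "good M" shows "good (msmult c M)"
proof -
  obtain L C where h: "band L M" "bnd C M" using assms unfolding good_def by blast
  have "band L (msmult c M)" unfolding band_def
  proof (intro allI impI)
    fix i k assume "msmult c M i k \<noteq> 0"
    then have "M i k \<noteq> 0" unfolding msmult_def by auto
    from bandD[OF h(1) this] show "valid i \<and> valid k \<and> \<bar>lv i - lv k\<bar> \<le> L \<and> \<bar>mv i - mv k\<bar> \<le> L" by blast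
  qed
  moreover have "bnd (cmod c * C) (msmult c M)" unfolding bnd_def
  proof (intro allI)
    fix i k
    show "cmod (msmult c M i k) \<le> cmod c * C" unfolding msmult_def norm_mult
      using bndD[OF h(2), of i k] by (simp add: mult_left_mono)
  qed
  ultimately show ?thesis unfolding good_def by blast
qed

lemma good_madj: assumes "good M" shows "good (madj M)"
proof -
  obtain L C where h: "band L M" "bnd C M" using assms unfolding good_def by blast
  have "band L (madj M)" unfolding band_def madj_def
  proof (intro allI impI)
    fix i k assume "cnj (M k i) \<noteq> 0"
    then have "M k i \<noteq> 0" by simp
    from bandD[OF h(1) this] show "valid i \<and> valid k \<and> \<bar>lv i - lv k\<bar> \<le> L \<and> \<bar>mv i - mv k\<bar> \<le> L"
      by (simp add: abs_minus_commute)
  qed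
  moreover have "bnd C (madj M)" unfolding bnd_def madj_def using bndD[OF h(2)] by simp
  ultimately show ?thesis unfolding good_def by blast
qed

lemma good_mone: "good mone"
proof -
  have "band 0 mone" unfolding band_def mone_def by simp
  moreover have "bnd 1 mone" unfolding bnd_def mone_def by simp
  ultimately show ?thesis unfolding good_def by blast
qed

lemma alg_gen_good: assumes "\<And>T. T \<in> G \<Longrightarrow> good T" shows "T \<in> alg_gen G \<Longrightarrow> good T"
  by (induction rule: alg_gen.induct)
     (auto intro: assms good_mone good_madd good_msmult good_mmult)

lemma nbs_sym: assumes "j \<in> nbs L i" shows "i \<in> nbs L j"
proof -
  obtain s a b where sab: "(s,a,b) \<in> boxI L" "j = (s, lv i + of_int a, mv i + of_int b)"
    using assms unfolding nbs_def by auto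
  have "(fst i, -a, -b) \<in> boxI L" using sab(1) unfolding boxI_def by auto
  moreover have "i = (\<lambda>(s,a,b). (s, lv j + of_int a, mv j + of_int b)) (fst i, -a, -b)"
    using sab(2) unfolding lv_def mv_def by (cases i) auto
  ultimately show ?thesis unfolding nbs_def by blast
qed

lemma CS_card:
  fixes a :: "'a \<Rightarrow> real"
  shows "(\<Sum>i\<in>I. a i)^2 \<le> real (card I) * (\<Sum>i\<in>I. (a i)^2)"
  using Cauchy_Schwarz_ineq_sum[of a "\<lambda>_. 1" I] by (simp add: mult.commute)

lemma good_bounded:
  assumes "good M"
  shows "mbounded M"
proof -
  obtain L C where h: "band L M" "bnd C M" using assms unfolding good_def by blast
  have C0: "0 \<le> C" using bnd_nonneg[OF h(2)] .
  define K where "K = real (KB L)"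
  have K0: "0 \<le> K" unfolding K_def by simp
  show ?thesis unfolding mbounded_def
  proof (intro exI allI impI conjI)
    fix v assume fv: "finsupp_vec v"
    define S where "S = {j. v j \<noteq> 0}"
    have finS: "finite S" using fv unfolding finsupp_vec_def S_def by blast
    define R where "R = (\<Union>j\<in>S. nbs L j)"
    have finR: "finite R" unfolding R_def using finS finite_nbs by blast
    have mvS: "mapply M v i = (\<Sum>j\<in>S. M i j * v j)" for i
      unfolding mapply_def by (rule infsum_fin[OF finS]) (simp add: S_def)
    have zero: "mapply M v i = 0" if "i \<notin> R" for i
    proof -
      have "M i j * v j = 0" if "j \<in> S" for j
      proof (rule ccontr)
        assume "M i j * v j \<noteq> 0"
        then have "M i j \<noteq> 0" by auto
        then have "i \<in> nbs L j" using band_col[OF h(1)] by blast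
        then show False using \<open>i \<notin> R\<close> \<open>j \<in> S\<close> unfolding R_def by blast
      qed
      then show ?thesis unfolding mvS by (intro sum.neutral) blast
    qed
    show "(\<lambda>i. (cmod (mapply M v i))^2) summable_on UNIV"
      by (rule summable_fin[OF finR]) (simp add: zero)
    have n1: "vnorm2 (mapply M v) = (\<Sum>i\<in>R. (cmod (mapply M v i))^2)"
      unfolding vnorm2_def by (rule infsum_fin[OF finR]) (simp add: zero)
    have n2: "vnorm2 v = (\<Sum>j\<in>S. (cmod (v j))^2)"
      unfolding vnorm2_def by (rule infsum_fin[OF finS]) (simp add: S_def)
    define w where "w j = (cmod (v j))^2" for j
    have per: "(cmod (mapply M v i))^2 \<le> C^2 * K * (\<Sum>j\<in>S. if j \<in> nbs L i then w j else 0)" for i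
    proof -
      have "cmod (mapply M v i) \<le> (\<Sum>j\<in>S. cmod (M i j * v j))" unfolding mvS by (rule norm_sum)
      also have "\<dots> = (\<Sum>j\<in>S \<inter> nbs L i. cmod (M i j * v j))"
      proof -
        have "(\<Sum>j\<in>S. cmod (M i j * v j)) = (\<Sum>j\<in>S. if j \<in> nbs L i then cmod (M i j * v j) else 0)"
        proof (rule sum.cong[OF refl])
          fix j assume "j \<in> S"
          show "cmod (M i j * v j) = (if j \<in> nbs L i then cmod (M i j * v j) else 0)"
          proof (cases "j \<in> nbs L i")
            case False
            then have "M i j = 0" using band_row[OF h(1), of i j] by blast
            then show ?thesis using False by simp
          qed simp
        qed
        then show ?thesis by (simp only: sum.inter_restrict[OF finS])
      qed
      also have "\<dots> \<le> (\<Sum>j\<in>S \<inter> nbs L i. C * cmod (v j))"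
        by (rule sum_mono) (simp add: norm_mult bndD[OF h(2)] mult_right_mono)
      also have "\<dots> = C * (\<Sum>j\<in>S \<inter> nbs L i. cmod (v j))" by (simp add: sum_distrib_left)
      finally have A: "cmod (mapply M v i) \<le> C * (\<Sum>j\<in>S \<inter> nbs L i. cmod (v j))" .
      have "(cmod (mapply M v i))^2 \<le> (C * (\<Sum>j\<in>S \<inter> nbs L i. cmod (v j)))^2"
        using A by (simp add: power_mono)
      also have "\<dots> = C^2 * (\<Sum>j\<in>S \<inter> nbs L i. cmod (v j))^2" by (simp add: power_mult_distrib)
      also have "\<dots> \<le> C^2 * (real (card (S \<inter> nbs L i)) * (\<Sum>j\<in>S \<inter> nbs L i. w j))"
        unfolding w_def by (rule mult_left_mono[OF CS_card]) simp
      also have "\<dots> \<le> C^2 * (K * (\<Sum>j\<in>S \<inter> nbs L i. w j))"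
      proof -
        have "card (S \<inter> nbs L i) \<le> card (nbs L i)" by (rule card_mono[OF finite_nbs]) blast
        then have "real (card (S \<inter> nbs L i)) \<le> K" unfolding K_def using card_nbs[of L i] by linarith
        moreover have "0 \<le> (\<Sum>j\<in>S \<inter> nbs L i. w j)" unfolding w_def by (simp add: sum_nonneg)
        ultimately show ?thesis by (simp add: mult_right_mono mult_left_mono)
      qed
      also have "\<dots> = C^2 * K * (\<Sum>j\<in>S. if j \<in> nbs L i then w j else 0)"
        by (simp only: sum.inter_restrict[OF finS])
      finally show ?thesis .
    qed
    have "vnorm2 (mapply M v) \<le> (\<Sum>i\<in>R. C^2 * K * (\<Sum>j\<in>S. if j \<in> nbs L i then w j else 0))"
      unfolding n1 by (rule sum_mono) (rule per)
    also have "\<dots> = C^2 * K * (\<Sum>j\<in>S. \<Sum>i\<in>R. if j \<in> nbs L i then w j else 0)"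
      by (simp add: sum_distrib_left sum.swap[of _ R S])
    also have "\<dots> \<le> C^2 * K * (\<Sum>j\<in>S. K * w j)"
    proof (rule mult_left_mono)
      show "0 \<le> C^2 * K" using K0 by simp
      show "(\<Sum>j\<in>S. \<Sum>i\<in>R. if j \<in> nbs L i then w j else 0) \<le> (\<Sum>j\<in>S. K * w j)"
      proof (rule sum_mono)
        fix j assume "j \<in> S"
        have "(\<Sum>i\<in>R. if j \<in> nbs L i then w j else 0) = (\<Sum>i\<in>R \<inter> {i. j \<in> nbs L i}. w j)"
          by (simp only: sum.inter_restrict[OF finR] mem_Collect_eq)
        also have "\<dots> = real (card (R \<inter> {i. j \<in> nbs L i})) * w j" by simp
        also have "\<dots> \<le> K * w j"
        proof (rule mult_right_mono)
          have "R \<inter> {i. j \<in> nbs L i} \<subseteq> nbs L j" using nbs_sym by blast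
          then have "card (R \<inter> {i. j \<in> nbs L i}) \<le> card (nbs L j)" by (rule card_mono[OF finite_nbs])
          then show "real (card (R \<inter> {i. j \<in> nbs L i})) \<le> K" unfolding K_def using card_nbs[of L j] by linarith
          show "0 \<le> w j" unfolding w_def by simp
        qed
        finally show "(\<Sum>i\<in>R. if j \<in> nbs L i then w j else 0) \<le> K * w j" .
      qed
    qed
    also have "\<dots> = (C^2 * K * K) * vnorm2 v" unfolding n2 w_def by (simp add: sum_distrib_left mult.assoc)
    finally show "vnorm2 (mapply M v) \<le> (C^2 * K * K) * vnorm2 v" .
  qed
qed

definition flip :: "idx \<Rightarrow> idx" where "flip i = (\<not> fst i, snd i)"
definition dd :: "idx \<Rightarrow> real" where "dd i = (if valid i then lv i + 1/2 else 0)"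

lemma flip_flip[simp]: "flip (flip i) = i" unfolding flip_def by simp
lemma valid_flip[simp]: "valid (flip i) = valid i" unfolding flip_def valid_def by (simp split: prod.splits)
lemma lv_flip[simp]: "lv (flip i) = lv i" unfolding flip_def lv_def by simp
lemma mv_flip[simp]: "mv (flip i) = mv i" unfolding flip_def mv_def by simp
lemma dd_flip[simp]: "dd (flip i) = dd i" unfolding dd_def by simp
lemma inj_flip: "inj flip" by (metis flip_flip injI)

lemma Dmat_eq: "Dmat i j = (if j = flip i then complex_of_real (dd i) else 0)"
  unfolding Dmat_def dd_def flip_def valid_def lv_def
  by (auto split: prod.splits)

lemma absDmat_eq: "absDmat i j = (if j = i then complex_of_real (dd i) else 0)"
  unfolding absDmat_def dd_def lv_def
  by (auto split: prod.splits)

lemma D_left: "mmult Dmat T i k = complex_of_real (dd i) * T (flip i) k"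
proof -
  have "mmult Dmat T i k = (\<Sum>j\<in>{flip i}. Dmat i j * T j k)"
    unfolding mmult_def by (rule infsum_fin) (auto simp: Dmat_eq)
  then show ?thesis by (simp add: Dmat_eq)
qed

lemma D_right: "mmult T Dmat i k = T i (flip k) * complex_of_real (dd k)"
proof -
  have "mmult T Dmat i k = (\<Sum>j\<in>{flip k}. T i j * Dmat j k)"
    unfolding mmult_def by (rule infsum_fin) (auto simp: Dmat_eq)
  then show ?thesis by (simp add: Dmat_eq)
qed

lemma absD_left: "mmult absDmat T i k = complex_of_real (dd i) * T i k"
proof -
  have "mmult absDmat T i k = (\<Sum>j\<in>{i}. absDmat i j * T j k)"
    unfolding mmult_def by (rule infsum_fin) (auto simp: absDmat_eq)
  then show ?thesis by (simp add: absDmat_eq)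
qed

lemma absD_right: "mmult T absDmat i k = T i k * complex_of_real (dd k)"
proof -
  have "mmult T absDmat i k = (\<Sum>j\<in>{k}. T i j * absDmat j k)"
    unfolding mmult_def by (rule infsum_fin) (auto simp: absDmat_eq)
  then show ?thesis by (simp add: absDmat_eq)
qed

lemma mcommD: "mcomm Dmat T i k = complex_of_real (dd i) * T (flip i) k - T i (flip k) * complex_of_real (dd k)"
  unfolding mcomm_def D_left D_right ..

lemma delta_eq: "delta T i k = complex_of_real (dd i - dd k) * T i k"
  unfolding delta_def mcomm_def absD_left absD_right by (simp add: algebra_simps)

lemma band_mcommD: assumes "band L M" shows "band L (mcomm Dmat M)"
  unfolding band_def
proof (intro allI impI)
  fix i k assume "mcomm Dmat M i k \<noteq> 0"
  then have "M (flip i) k \<noteq> 0 \<or> M i (flip k) \<noteq> 0" unfolding mcommD by auto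
  then show "valid i \<and> valid k \<and> \<bar>lv i - lv k\<bar> \<le> L \<and> \<bar>mv i - mv k\<bar> \<le> L"
  proof
    assume "M (flip i) k \<noteq> 0"
    from bandD[OF assms this] show ?thesis by simp
  next
    assume "M i (flip k) \<noteq> 0"
    from bandD[OF assms this] show ?thesis by simp
  qed
qed

lemma good_delta: assumes "good T" shows "good (delta T)"
proof -
  obtain L C where h: "band L T" "bnd C T" using assms unfolding good_def by blast
  have "band L (delta T)" unfolding band_def
  proof (intro allI impI)
    fix i k assume "delta T i k \<noteq> 0"
    then have "T i k \<noteq> 0" unfolding delta_eq by auto
    from bandD[OF h(1) this] show "valid i \<and> valid k \<and> \<bar>lv i - lv k\<bar> \<le> L \<and> \<bar>mv i - mv k\<bar> \<le> L" by blast
  qed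
  moreover have "bnd (\<bar>L\<bar> * C) (delta T)" unfolding bnd_def
  proof (intro allI)
    fix i k
    show "cmod (delta T i k) \<le> \<bar>L\<bar> * C"
    proof (cases "T i k = 0")
      case True
      then show ?thesis unfolding delta_eq using bnd_nonneg[OF h(2)] by simp
    next
      case False
      from bandD[OF h(1) False] have "\<bar>dd i - dd k\<bar> \<le> \<bar>L\<bar>" unfolding dd_def by simp
      then show ?thesis unfolding delta_eq norm_mult norm_of_real
        using bndD[OF h(2), of i k] by (simp add: mult_mono)
    qed
  qed
  ultimately show ?thesis unfolding good_def by blast
qed

lemma good_delta_pow: "good T \<Longrightarrow> good ((delta ^^ n) T)"
  by (induction n) (auto intro: good_delta)

definition GG :: "mat \<Rightarrow> bool" where
  "GG M = (good M \<and> good (mcomm Dmat M))"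

lemma mmult_sup:
  assumes "band L M" "finite F" "nbs L i \<subseteq> F"
  shows "mmult M X i k = (\<Sum>j\<in>F. M i j * X j k)"
  unfolding mmult_def
proof (rule infsum_fin[OF assms(2)])
  fix j assume "j \<notin> F"
  then have "j \<notin> nbs L i" using assms(3) by blast
  then have "M i j = 0" using band_row[OF assms(1), of i j] by blast
  then show "M i j * X j k = 0" by simp
qed

lemma mcomm_mult:
  assumes "band L M"
  shows "mcomm Dmat (mmult M N) = madd (mmult (mcomm Dmat M) N) (mmult M (mcomm Dmat N))"
proof (intro ext)
  fix i k
  define G where "G = nbs L i \<union> nbs L (flip i)"
  define F where "F = G \<union> flip ` G"
  have finF: "finite F" unfolding F_def G_def by (simp add: finite_nbs)
  have flipF: "flip ` F = F" unfolding F_def by (simp add: image_Un image_image Un_commute)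
  have s1: "nbs L i \<subseteq> F" "nbs L (flip i) \<subseteq> F" unfolding F_def G_def by auto
  let ?c = "\<lambda>j. complex_of_real (dd j)"
  have bc: "band L (mcomm Dmat M)" by (rule band_mcommD[OF assms])
  have e1: "mmult M N (flip i) k = (\<Sum>j\<in>F. M (flip i) j * N j k)" by (rule mmult_sup[OF assms finF s1(2)])
  have e2: "mmult M N i (flip k) = (\<Sum>j\<in>F. M i j * N j (flip k))" by (rule mmult_sup[OF assms finF s1(1)])
  have e3: "mmult (mcomm Dmat M) N i k = (\<Sum>j\<in>F. mcomm Dmat M i j * N j k)" by (rule mmult_sup[OF bc finF s1(1)])
  have e4: "mmult M (mcomm Dmat N) i k = (\<Sum>j\<in>F. M i j * mcomm Dmat N j k)" by (rule mmult_sup[OF assms finF s1(1)])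
  have re: "(\<Sum>j\<in>F. M i (flip j) * ?c j * N j k) = (\<Sum>j\<in>F. M i j * ?c j * N (flip j) k)"
  proof -
    have "(\<Sum>j\<in>F. M i j * ?c j * N (flip j) k) = (\<Sum>j\<in>flip ` F. M i j * ?c j * N (flip j) k)"
      using flipF by simp
    also have "\<dots> = (\<Sum>j\<in>F. M i (flip j) * ?c (flip j) * N (flip (flip j)) k)"
      by (rule sum.reindex[OF inj_on_subset[OF inj_flip subset_UNIV], unfolded comp_def])
    finally show ?thesis by simp
  qed
  have "madd (mmult (mcomm Dmat M) N) (mmult M (mcomm Dmat N)) i k
      = (\<Sum>j\<in>F. (?c i * M (flip i) j - M i (flip j) * ?c j) * N j k)
        + (\<Sum>j\<in>F. M i j * (?c j * N (flip j) k - N j (flip k) * ?c k))"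
    unfolding madd_def e3 e4 mcommD ..
  also have "\<dots> = ?c i * (\<Sum>j\<in>F. M (flip i) j * N j k) - (\<Sum>j\<in>F. M i (flip j) * ?c j * N j k)
        + (\<Sum>j\<in>F. M i j * ?c j * N (flip j) k) - (\<Sum>j\<in>F. M i j * N j (flip k)) * ?c k"
    by (simp add: algebra_simps sum_subtractf sum_distrib_left sum_distrib_right)
  also have "\<dots> = ?c i * mmult M N (flip i) k - mmult M N i (flip k) * ?c k"
    unfolding e1 e2 re by simp
  also have "\<dots> = mcomm Dmat (mmult M N) i k" unfolding mcommD ..
  finally show "mcomm Dmat (mmult M N) i k = madd (mmult (mcomm Dmat M) N) (mmult M (mcomm Dmat N)) i k" by simp
qed

lemma GG_mmult: assumes "GG M" "GG N" shows "GG (mmult M N)"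
proof -
  obtain L C where "band L M" using assms unfolding GG_def good_def by blast
  then show ?thesis using assms unfolding GG_def mcomm_mult[OF \<open>band L M\<close>]
    by (simp add: good_mmult good_madd)
qed

lemma mcomm_madd: "mcomm Dmat (madd M N) = madd (mcomm Dmat M) (mcomm Dmat N)"
  by (intro ext) (simp add: mcommD madd_def algebra_simps)

lemma mcomm_msmult: "mcomm Dmat (msmult c M) = msmult c (mcomm Dmat M)"
  by (intro ext) (simp add: mcommD msmult_def algebra_simps)

lemma mcomm_madj: "mcomm Dmat (madj M) = msmult (-1) (madj (mcomm Dmat M))"
  by (intro ext) (simp add: mcommD msmult_def madj_def algebra_simps)

lemma flip_eq: "(i = flip k) = (k = flip i)" by (metis flip_flip)

lemma mcomm_mone: "mcomm Dmat mone = msmult 0 mone"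
proof (intro ext)
  fix i k
  show "mcomm Dmat mone i k = msmult 0 mone i k"
  proof (cases "k = flip i")
    case True
    then have "i = flip k" by (simp add: flip_eq)
    then show ?thesis using True by (simp add: mcommD msmult_def mone_def)
  next
    case False
    then have "i \<noteq> flip k" by (simp add: flip_eq)
    then show ?thesis using False by (simp add: mcommD msmult_def mone_def)
  qed
qed

lemma GG_madd: "GG M \<Longrightarrow> GG N \<Longrightarrow> GG (madd M N)"
  unfolding GG_def mcomm_madd by (simp add: good_madd)

lemma GG_msmult: "GG M \<Longrightarrow> GG (msmult c M)"
  unfolding GG_def mcomm_msmult by (simp add: good_msmult)

lemma GG_madj: "GG M \<Longrightarrow> GG (madj M)"
  unfolding GG_def mcomm_madj by (simp add: good_msmult good_madj)

lemma GG_mone: "GG mone"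
  unfolding GG_def mcomm_mone by (simp add: good_msmult good_mone)

lemma alg_gen_GG: assumes "\<And>T. T \<in> G \<Longrightarrow> GG T" shows "T \<in> alg_gen G \<Longrightarrow> GG T"
  by (induction rule: alg_gen.induct)
     (auto intro: assms GG_mone GG_madd GG_msmult GG_mmult)

lemma sgnb_abs[simp]: "\<bar>sgnb s\<bar> = 1" unfolding sgnb_def by simp

lemma valid_l_ge: "valid (s,l,m) \<Longrightarrow> 1/2 \<le> l"
  using valid_l[of "(s,l,m)"] unfolding lv_def by auto

lemma valid_neg: "valid (\<not> s, l, m) = valid (s, l, m)"
  unfolding valid_def by simp

lemma generic_GG:
  fixes g h :: "real \<Rightarrow> real \<Rightarrow> real \<Rightarrow> real \<Rightarrow> real" and T :: mat
  assumes T: "\<And>s' l' m' s l m. T (s',l',m') (s,l,m) = (if valid (s',l',m') \<and> valid (s,l,m) \<and> s' = s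
                  then complex_of_real (g l' m' l m + sgnb s * h l' m' l m) else 0)"
  and H1: "\<And>s' l' m' s l m. valid (s',l',m') \<Longrightarrow> valid (s,l,m) \<Longrightarrow> g l' m' l m \<noteq> 0 \<Longrightarrow> \<bar>l' - l\<bar> \<le> 1 \<and> \<bar>m' - m\<bar> \<le> 1"
  and H2: "\<And>s' l' m' s l m. valid (s',l',m') \<Longrightarrow> valid (s,l,m) \<Longrightarrow> h l' m' l m \<noteq> 0 \<Longrightarrow> l' = l \<and> \<bar>m' - m\<bar> \<le> 1"
  and H3: "\<And>s' l' m' s l m. valid (s',l',m') \<Longrightarrow> valid (s,l,m) \<Longrightarrow> \<bar>g l' m' l m\<bar> \<le> Cg"
  and H4: "\<And>s' l' m' s l m. valid (s',l',m') \<Longrightarrow> valid (s,l,m) \<Longrightarrow> (l + 1/2) * \<bar>h l' m' l m\<bar> \<le> Ch"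
  and C0: "0 \<le> Cg" "0 \<le> Ch"
  shows "GG T"
proof -
  have H4': "\<bar>h l' m' l m\<bar> \<le> Ch" if "valid (s',l',m')" "valid (s,l,m)" for s' l' m' s l m
  proof -
    have "1 \<le> l + 1/2" using valid_l_ge[OF that(2)] by simp
    then have "\<bar>h l' m' l m\<bar> \<le> (l + 1/2) * \<bar>h l' m' l m\<bar>" by (simp add: mult_le_cancel_right1)
    then show ?thesis using H4[OF that] by linarith
  qed
  have bandT: "band 1 T" unfolding band_def
  proof (intro allI impI)
    fix i k assume nz: "T i k \<noteq> 0"
    obtain s' l' m' where i: "i = (s',l',m')" by (cases i) auto
    obtain s l m where k: "k = (s,l,m)" by (cases k) auto
    have v: "valid (s',l',m')" "valid (s,l,m)" and gh: "g l' m' l m + sgnb s * h l' m' l m \<noteq> 0"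
      using nz unfolding i k T by (simp_all split: if_splits) (metis of_real_0 of_real_add of_real_mult)
    have "g l' m' l m \<noteq> 0 \<or> h l' m' l m \<noteq> 0" using gh by auto
    then have "\<bar>l' - l\<bar> \<le> 1 \<and> \<bar>m' - m\<bar> \<le> 1"
    proof
      assume "g l' m' l m \<noteq> 0" then show ?thesis using H1[OF v] by blast
    next
      assume "h l' m' l m \<noteq> 0" then show ?thesis using H2[OF v] by simp
    qed
    then show "valid i \<and> valid k \<and> \<bar>lv i - lv k\<bar> \<le> 1 \<and> \<bar>mv i - mv k\<bar> \<le> 1"
      using v unfolding i k lv_def mv_def by simp
  qed
  have bndT: "bnd (Cg + Ch) T" unfolding bnd_def
  proof (intro allI)
    fix i k :: idx
    obtain s' l' m' where i: "i = (s',l',m')" by (cases i) auto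
    obtain s l m where k: "k = (s,l,m)" by (cases k) auto
    show "cmod (T i k) \<le> Cg + Ch"
    proof (cases "valid (s',l',m') \<and> valid (s,l,m) \<and> s' = s")
      case True
      then have v: "valid (s',l',m')" "valid (s,l,m)" by auto
      have "\<bar>g l' m' l m + sgnb s * h l' m' l m\<bar> \<le> \<bar>g l' m' l m\<bar> + \<bar>sgnb s * h l' m' l m\<bar>" by (rule abs_triangle_ineq)
      also have "\<dots> = \<bar>g l' m' l m\<bar> + \<bar>h l' m' l m\<bar>" by (simp add: abs_mult)
      also have "\<dots> \<le> Cg + Ch" using H3[OF v] H4'[OF v] by linarith
      finally show ?thesis unfolding i k T using True C0 by (simp del: of_real_add of_real_mult)
    next
      case False
      show ?thesis unfolding i k T if_not_P[OF False] using C0 by simp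
    qed
  qed
  have bndC: "bnd (Cg + 2 * Ch) (mcomm Dmat T)" unfolding bnd_def
  proof (intro allI)
    fix i k :: idx
    obtain s' l' m' where i: "i = (s',l',m')" by (cases i) auto
    obtain s l m where k: "k = (s,l,m)" by (cases k) auto
    have fi: "flip (s',l',m') = (\<not> s', l', m')" and fk: "flip (s,l,m) = (\<not> s, l, m)" unfolding flip_def by simp_all
    show "cmod (mcomm Dmat T i k) \<le> Cg + 2 * Ch"
    proof (cases "valid (s',l',m') \<and> valid (s,l,m) \<and> s' \<noteq> s")
      case False
      then have "T (flip i) k = 0" "T i (flip k) = 0" unfolding i k fi fk T
        using valid_neg[of s' l' m'] valid_neg[of s l m] by auto
      then show ?thesis unfolding mcommD using C0 by simp
    next
      case True
      then have v: "valid (s',l',m')" "valid (s,l,m)" and ss: "s' = (\<not> s)" by auto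
      let ?g = "g l' m' l m" and ?h = "h l' m' l m"
      have "mcomm Dmat T i k = complex_of_real ((l' + 1/2) * (?g + sgnb s * ?h) - (?g + sgnb s' * ?h) * (l + 1/2))"
      proof -
        have t1: "T (flip i) k = complex_of_real (?g + sgnb s * ?h)"
          unfolding i k fi T using v ss valid_neg[of s l' m'] by simp
        have t2: "T i (flip k) = complex_of_real (?g + sgnb s' * ?h)"
          unfolding i k fk T using v ss valid_neg[of s l m] by simp
        have d1: "dd i = l' + 1/2" unfolding i dd_def lv_def using v by simp
        have d2: "dd k = l + 1/2" unfolding k dd_def lv_def using v by simp
        show ?thesis unfolding mcommD t1 t2 d1 d2 by simp
      qed
      also have "(l' + 1/2) * (?g + sgnb s * ?h) - (?g + sgnb s' * ?h) * (l + 1/2)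
          = (l' - l) * ?g + (l + 1/2) * (sgnb s - sgnb s') * ?h"
      proof (cases "?h = 0")
        case True then show ?thesis by (simp add: algebra_simps)
      next
        case False
        then have "l' = l" using H2[OF v] by blast
        then show ?thesis by (simp add: field_simps)
      qed
      finally have e: "cmod (mcomm Dmat T i k) = \<bar>(l' - l) * ?g + (l + 1/2) * (sgnb s - sgnb s') * ?h\<bar>" by (simp only: norm_of_real)
      have a1: "\<bar>(l' - l) * ?g\<bar> \<le> Cg"
      proof (cases "?g = 0")
        case True then show ?thesis using C0 by simp
      next
        case False
        then have "\<bar>l' - l\<bar> \<le> 1" using H1[OF v] by blast
        then have "\<bar>l' - l\<bar> * \<bar>?g\<bar> \<le> 1 * \<bar>?g\<bar>" by (rule mult_right_mono) simp
        then show ?thesis using H3[OF v] by (simp add: abs_mult)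
      qed
      have a2: "\<bar>(l + 1/2) * (sgnb s - sgnb s') * ?h\<bar> \<le> 2 * Ch"
      proof -
        have "\<bar>sgnb s - sgnb s'\<bar> \<le> 2" unfolding sgnb_def by simp
        have l0: "0 \<le> l + 1/2" using valid_l_ge[OF v(2)] by simp
        have "\<bar>(l + 1/2) * (sgnb s - sgnb s') * ?h\<bar> = \<bar>sgnb s - sgnb s'\<bar> * ((l + 1/2) * \<bar>?h\<bar>)"
          using l0 by (simp add: abs_mult)
        also have "\<dots> \<le> 2 * Ch"
          using \<open>\<bar>sgnb s - sgnb s'\<bar> \<le> 2\<close> H4[OF v] l0 C0 by (simp add: mult_mono)
        finally show ?thesis .
      qed
      show ?thesis unfolding e using a1 a2 abs_triangle_ineq[of "(l' - l) * ?g" "(l + 1/2) * (sgnb s - sgnb s') * ?h"]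
        by linarith
    qed
  qed
  show ?thesis unfolding GG_def good_def using bandT bndT band_mcommD[OF bandT] bndC by blast
qed

context
  fixes q :: real
  assumes q0: "0 < q" and q1: "q < 1"
begin

lemma D0pos: "0 < 1/q - q"
proof -
  have "q < 1/q" using q0 q1 by (smt (verit) le_divide_eq_1_pos)
  then show ?thesis by simp
qed

lemma qn_eq: "qnum q x = (q powr (-x) - q powr x) / (1/q - q)"
proof -
  have "qnum q x = (- (q powr (-x) - q powr x)) / (- (1/q - q))" unfolding qnum_def by simp
  then show ?thesis by (simp only: minus_divide_divide)
qed

lemma qn_nonneg: assumes "0 \<le> x" shows "0 \<le> qnum q x"
proof -
  have "q powr x \<le> q powr (-x)" using assms q0 q1 by (intro powr_mono') auto
  then show ?thesis unfolding qn_eq using D0pos by simp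
qed

lemma qn_up: "qnum q x \<le> q powr (-x) / (1/q - q)"
  unfolding qn_eq using D0pos by (simp add: divide_right_mono)

lemma qn_low: assumes "1 \<le> x" shows "q powr (1 - x) \<le> qnum q x"
proof -
  have "q powr (2*x) \<le> q powr 2" using assms q0 q1 by (intro powr_mono') auto
  also have "q powr 2 = q^2" using q0 by simp
  finally have a: "q powr (2*x) \<le> q^2" .
  have b: "q powr x = q powr (-x) * q powr (2*x)" by (simp add: powr_add[symmetric])
  have c: "q powr (-x) * q^2 \<ge> q powr (-x) * q powr (2*x)" using a by (simp add: mult_left_mono)
  have "q powr (-x) * (1 - q^2) \<le> q powr (-x) - q powr x" using b c by (simp add: algebra_simps)
  then have "q powr (-x) * (1 - q^2) / (1/q - q) \<le> qnum q x" unfolding qn_eq using D0pos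
    by (simp add: divide_right_mono)
  moreover have "(1 - q^2) / (1/q - q) = q"
  proof -
    have "1/q - q = (1 - q^2) / q" using q0 by (simp add: field_simps power2_eq_square)
    moreover have "1 - q^2 \<noteq> 0"
    proof -
      have "q * q < 1 * 1" using q0 q1 by (intro mult_strict_mono) auto
      then show ?thesis by (simp add: power2_eq_square)
    qed
    ultimately show ?thesis using q0 by simp
  qed
  moreover have "q powr (1 - x) = q powr (-x) * q"
  proof -
    have "q powr (1 - x) = q powr (1 + (-x))" by simp
    also have "\<dots> = q powr 1 * q powr (-x)" by (rule powr_add)
    finally show ?thesis using q0 by simp
  qed
  ultimately show ?thesis by (metis times_divide_eq_right)
qed

lemma qn_pos_low: assumes "1 \<le> x" shows "0 < qnum q x"
  using qn_low[OF assms] q0 by (smt (verit) powr_gt_zero)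

lemma qprod_up: assumes "0 \<le> a" "0 \<le> b"
  shows "qnum q a * qnum q b \<le> q powr (-(a+b)) / (1/q - q)^2"
proof -
  have "qnum q a * qnum q b \<le> (q powr (-a) / (1/q - q)) * (q powr (-b) / (1/q - q))"
    using qn_up qn_nonneg assms D0pos by (intro mult_mono) auto
  also have "\<dots> = q powr (-(a+b)) / (1/q - q)^2" using powr_add[of q "-a" "-b"] by (simp add: power2_eq_square)
  finally show ?thesis .
qed

lemma sq_up: assumes "0 \<le> a" "0 \<le> b"
  shows "sqrt (qnum q a * qnum q b) \<le> q powr (-(a+b)/2) / (1/q - q)"
proof -
  have "qnum q a * qnum q b \<le> q powr (-(a+b)) / (1/q - q)^2" by (rule qprod_up[OF assms])
  also have "\<dots> = (q powr (-(a+b)/2) / (1/q - q))^2"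
  proof -
    have "q powr (-(a+b)) = q powr (-(a+b)/2) * q powr (-(a+b)/2)" by (simp add: powr_add[symmetric])
    then show ?thesis by (simp add: power2_eq_square)
  qed
  finally have "sqrt (qnum q a * qnum q b) \<le> sqrt ((q powr (-(a+b)/2) / (1/q - q))^2)" by (rule real_sqrt_le_mono)
  also have "\<dots> = q powr (-(a+b)/2) / (1/q - q)" using D0pos by simp
  finally show ?thesis .
qed

lemma sq_nonneg: "0 \<le> sqrt (qnum q a * qnum q b)" if "0 \<le> a" "0 \<le> b"
  using qn_nonneg that by simp

lemma pw3: "q powr a * (q powr b / d) / q powr c = q powr (a + b - c) / d"
  using q0 by (simp add: powr_add powr_diff)

lemma xq: assumes "0 \<le> x" shows "x * q powr x \<le> 1 / (- ln q)"
proof -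
  have lq: "0 < - ln q" using q0 q1 by simp
  define y where "y = x * (- ln q)"
  have y0: "0 \<le> y" unfolding y_def using assms lq by (simp add: mult_nonneg_nonpos)
  have "q powr x = exp (- y)" unfolding y_def powr_def using q0 by (simp add: mult.commute)
  then have "x * q powr x * (- ln q) = y * exp (- y)" unfolding y_def by (simp add: algebra_simps)
  also have "\<dots> \<le> 1"
  proof -
    have "y \<le> exp y" using exp_ge_add_one_self[of y] by linarith
    then have "y * exp (- y) \<le> exp y * exp (-y)" by (simp add: mult_right_mono)
    then show ?thesis by (simp add: exp_minus)
  qed
  finally have "x * q powr x * (- ln q) \<le> 1" .
  then show ?thesis using lq by (simp add: field_simps)
qed

lemma lq_bound: assumes "1/2 \<le> l" shows "(l + 1/2) * q powr (2*l - 1) \<le> q powr (-2) / (- ln q)"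
proof -
  have e: "q powr (2*l - 1) = q powr (2*l + 1) * q powr (-2)" by (simp add: powr_add[symmetric])
  have "(l + 1/2) * q powr (2*l - 1) \<le> (2*l + 1) * q powr (2*l - 1)"
    using assms by (intro mult_right_mono) auto
  also have "\<dots> = ((2*l+1) * q powr (2*l + 1)) * q powr (-2)" unfolding e by simp
  also have "\<dots> \<le> (1 / (- ln q)) * q powr (-2)"
    using xq[of "2*l+1"] assms by (intro mult_right_mono) auto
  finally show ?thesis by simp
qed

end

definition A1 :: "real \<Rightarrow> real \<Rightarrow> real \<Rightarrow> real" where
  "A1 q l m = q powr (m - l - 1/2) * sqrt (qnum q (l + m + 1) * qnum q (l + m + 2)) / qnum q (2*l + 2)"
definition A2 :: "real \<Rightarrow> real \<Rightarrow> real \<Rightarrow> real" where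
  "A2 q l m = q powr (m + l + 1/2) * sqrt (qnum q (l - m - 1) * qnum q (l - m)) / qnum q (2*l)"
definition A3 :: "real \<Rightarrow> real \<Rightarrow> real \<Rightarrow> real" where
  "A3 q l m = ((1 + q^2) * q powr (m - 1/2) / (qnum q (2*l) * qnum q (2*l + 2))) * sqrt (qnum q (l + m + 1) * qnum q (l - m))"
definition B1 :: "real \<Rightarrow> real \<Rightarrow> real \<Rightarrow> real" where
  "B1 q l m = q powr (m + 1) * sqrt (qnum q (l + m + 1) * qnum q (l - m + 1)) / qnum q (2*l + 2)"
definition B2 :: "real \<Rightarrow> real \<Rightarrow> real \<Rightarrow> real" where
  "B2 q l m = q powr (m + 1) * sqrt (qnum q (l + m) * qnum q (l - m)) / qnum q (2*l)"
definition B3 :: "real \<Rightarrow> real \<Rightarrow> real \<Rightarrow> real" where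
  "B3 q l m = (qnum q (l - m + 1) * qnum q (l + m) - q^2 * qnum q (l - m) * qnum q (l + m + 1)) / (qnum q (2*l) * qnum q (2*l + 2))"

definition gA :: "real \<Rightarrow> real \<Rightarrow> real \<Rightarrow> real \<Rightarrow> real \<Rightarrow> real" where
  "gA q l' m' l m = (if l' = l + 1 \<and> m' = m + 1 then A1 q l m else if l' = l - 1 \<and> m' = m + 1 then - A2 q l m else 0)"
definition hA :: "real \<Rightarrow> real \<Rightarrow> real \<Rightarrow> real \<Rightarrow> real \<Rightarrow> real" where
  "hA q l' m' l m = (if l' = l \<and> m' = m + 1 then A3 q l m else 0)"
definition gB :: "real \<Rightarrow> real \<Rightarrow> real \<Rightarrow> real \<Rightarrow> real \<Rightarrow> real" where
  "gB q l' m' l m = (if m' = m then (if l' = l + 1 then - B1 q l m else if l' = l - 1 then - B2 q l m else 0) else 0)"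
definition hB :: "real \<Rightarrow> real \<Rightarrow> real \<Rightarrow> real \<Rightarrow> real \<Rightarrow> real" where
  "hB q l' m' l m = (if m' = m \<and> l' = l then B3 q l m else 0)"

lemma piA_form: "piA q (s',l',m') (s,l,m) = (if valid (s',l',m') \<and> valid (s,l,m) \<and> s' = s
    then complex_of_real (gA q l' m' l m + sgnb s * hA q l' m' l m) else 0)"
proof -
  have e1: "piA q (s',l',m') (s,l,m) = (if valid (s',l',m') \<and> valid (s,l,m) \<and> s' = s then complex_of_real
       (if l' = l + 1 \<and> m' = m + 1 then
          q powr (m - l - 1/2) * sqrt (qnum q (l + m + 1) * qnum q (l + m + 2)) / qnum q (2*l + 2)
        else if l' = l - 1 \<and> m' = m + 1 then
          - (q powr (m + l + 1/2) * sqrt (qnum q (l - m - 1) * qnum q (l - m)) / qnum q (2*l))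
        else if l' = l \<and> m' = m + 1 then
          sgnb s * ((1 + q^2) * q powr (m - 1/2) / (qnum q (2*l) * qnum q (2*l + 2)))
            * sqrt (qnum q (l + m + 1) * qnum q (l - m))
        else 0)
     else 0)" by (simp only: piA_def prod.case)
  have e2: "(if l' = l + 1 \<and> m' = m + 1 then
          q powr (m - l - 1/2) * sqrt (qnum q (l + m + 1) * qnum q (l + m + 2)) / qnum q (2*l + 2)
        else if l' = l - 1 \<and> m' = m + 1 then
          - (q powr (m + l + 1/2) * sqrt (qnum q (l - m - 1) * qnum q (l - m)) / qnum q (2*l))
        else if l' = l \<and> m' = m + 1 then
          sgnb s * ((1 + q^2) * q powr (m - 1/2) / (qnum q (2*l) * qnum q (2*l + 2)))
            * sqrt (qnum q (l + m + 1) * qnum q (l - m))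
        else 0) = gA q l' m' l m + sgnb s * hA q l' m' l m"
    unfolding gA_def hA_def A1_def A2_def A3_def by (auto simp: mult.assoc)
  show ?thesis unfolding e1 e2 ..
qed

lemma piB_form: "piB q (s',l',m') (s,l,m) = (if valid (s',l',m') \<and> valid (s,l,m) \<and> s' = s
    then complex_of_real (gB q l' m' l m + sgnb s * hB q l' m' l m) else 0)"
proof -
  have e1: "piB q (s',l',m') (s,l,m) = (if valid (s',l',m') \<and> valid (s,l,m) \<and> s' = s \<and> m' = m then complex_of_real
       (if l' = l + 1 then
          - (q powr (m + 1) * sqrt (qnum q (l + m + 1) * qnum q (l - m + 1)) / qnum q (2*l + 2))
        else if l' = l - 1 then
          - (q powr (m + 1) * sqrt (qnum q (l + m) * qnum q (l - m)) / qnum q (2*l))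
        else if l' = l then
          sgnb s * ((qnum q (l - m + 1) * qnum q (l + m) - q^2 * qnum q (l - m) * qnum q (l + m + 1))
            / (qnum q (2*l) * qnum q (2*l + 2)))
        else 0)
     else 0)" by (simp only: piB_def prod.case)
  have e2: "(if m' = m then (if l' = l + 1 then
          - (q powr (m + 1) * sqrt (qnum q (l + m + 1) * qnum q (l - m + 1)) / qnum q (2*l + 2))
        else if l' = l - 1 then
          - (q powr (m + 1) * sqrt (qnum q (l + m) * qnum q (l - m)) / qnum q (2*l))
        else if l' = l then
          sgnb s * ((qnum q (l - m + 1) * qnum q (l + m) - q^2 * qnum q (l - m) * qnum q (l + m + 1))
            / (qnum q (2*l) * qnum q (2*l + 2)))
        else 0) else 0) = gB q l' m' l m + sgnb s * hB q l' m' l m"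
    unfolding gB_def hB_def B1_def B2_def B3_def by auto
  have e3: "(if valid (s',l',m') \<and> valid (s,l,m) \<and> s' = s \<and> m' = m then complex_of_real X else 0)
      = (if valid (s',l',m') \<and> valid (s,l,m) \<and> s' = s then complex_of_real (if m' = m then X else 0) else 0)" for X
    by (cases "m' = m") auto
  show ?thesis unfolding e1 e3 e2 ..
qed

lemma valid_tup: "valid (s,l,m) \<Longrightarrow> 1/2 \<le> l \<and> - l \<le> m \<and> m \<le> l"
  using valid_l_ge[of s l m] valid_bounds[of "(s,l,m)"] unfolding lv_def mv_def by simp

context
  fixes q :: real
  assumes q0: "0 < q" and q1: "q < 1"
begin

lemma fracb:
  assumes "0 \<le> S" "S \<le> q powr b / d" "q powr c \<le> N" "0 < d"
  shows "0 \<le> q powr a * S / N \<and> q powr a * S / N \<le> q powr (a + b - c) / d"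
proof -
  have N0: "0 < N" using assms(3) q0 by (smt (verit) powr_gt_zero)
  have "0 \<le> q powr a * S / N" using assms(1) N0 by simp
  moreover have "q powr a * S / N \<le> q powr a * (q powr b / d) / q powr c"
  proof (rule frac_le)
    show "0 \<le> q powr a * (q powr b / d)" using assms(4) by simp
    show "q powr a * S \<le> q powr a * (q powr b / d)" using assms(2) by (intro mult_left_mono) auto
    show "0 < q powr c" using q0 by simp
    show "q powr c \<le> N" by (rule assms(3))
  qed
  moreover have "q powr a * (q powr b / d) / q powr c = q powr (a + b - c) / d"
    by (rule pw3[OF q0 q1])
  ultimately show ?thesis by simp
qed

lemma A1_bound: assumes "valid (s,l,m)" shows "\<bar>A1 q l m\<bar> \<le> q powr (-1) / (1/q - q)"
proof -
  have v: "1/2 \<le> l" "- l \<le> m" "m \<le> l" using valid_tup[OF assms] by auto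
  have D: "0 < 1/q - q" by (rule D0pos[OF q0 q1])
  have "0 \<le> A1 q l m \<and> A1 q l m \<le> q powr ((m - l - 1/2) + (-((l+m+1)+(l+m+2))/2) - (1 - (2*l+2))) / (1/q - q)"
    unfolding A1_def
  proof (rule fracb)
    show "0 \<le> sqrt (qnum q (l + m + 1) * qnum q (l + m + 2))" using sq_nonneg[OF q0 q1] v by simp
    show "sqrt (qnum q (l + m + 1) * qnum q (l + m + 2)) \<le> q powr (-((l+m+1)+(l+m+2))/2) / (1/q - q)"
      by (rule sq_up[OF q0 q1]) (use v in auto)
    show "q powr (1 - (2*l+2)) \<le> qnum q (2*l+2)" by (rule qn_low[OF q0 q1]) (use v in auto)
  qed (rule D)
  moreover have ex: "(m - l - 1/2) + (-((l+m+1)+(l+m+2))/2) - (1 - (2*l+2)) = -1" by (simp add: field_simps)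
  ultimately have "0 \<le> A1 q l m \<and> A1 q l m \<le> q powr (-1) / (1/q - q)" by (simp only: ex)
  then show ?thesis by linarith
qed

lemma A2_bound: assumes "valid (s,l,m)" "valid (s,l-1,m+1)" shows "\<bar>A2 q l m\<bar> \<le> 1 / (1/q - q)"
proof -
  have v: "1/2 \<le> l" "- l \<le> m" "m \<le> l" using valid_tup[OF assms(1)] by auto
  have v2: "m + 1 \<le> l - 1" using valid_tup[OF assms(2)] by auto
  have D: "0 < 1/q - q" by (rule D0pos[OF q0 q1])
  have "0 \<le> A2 q l m \<and> A2 q l m \<le> q powr ((m + l + 1/2) + (-((l-m-1)+(l-m))/2) - (1 - 2*l)) / (1/q - q)"
    unfolding A2_def
  proof (rule fracb)
    show "0 \<le> sqrt (qnum q (l - m - 1) * qnum q (l - m))" using sq_nonneg[OF q0 q1] v v2 by simp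
    show "sqrt (qnum q (l - m - 1) * qnum q (l - m)) \<le> q powr (-((l-m-1)+(l-m))/2) / (1/q - q)"
      by (rule sq_up[OF q0 q1]) (use v v2 in auto)
    show "q powr (1 - 2*l) \<le> qnum q (2*l)" by (rule qn_low[OF q0 q1]) (use v in auto)
  qed (rule D)
  moreover have ex: "(m + l + 1/2) + (-((l-m-1)+(l-m))/2) - (1 - 2*l) = 2*m + 2*l" by (simp add: field_simps)
  ultimately have F: "0 \<le> A2 q l m \<and> A2 q l m \<le> q powr (2*m + 2*l) / (1/q - q)" by (simp only: ex)
  have "q powr (2*m + 2*l) \<le> 1" using v q0 q1 by (intro powr_le1) auto
  then have "q powr (2*m + 2*l) / (1/q - q) \<le> 1 / (1/q - q)" using D by (intro divide_right_mono) auto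
  then show ?thesis using F by linarith
qed

lemma A3_bound: assumes "valid (s,l,m)" "valid (s,l,m+1)"
  shows "\<bar>A3 q l m\<bar> \<le> (1 + q^2) / (1/q - q) * q powr (2*l - 1)"
proof -
  have v: "1/2 \<le> l" "- l \<le> m" "m \<le> l" using valid_tup[OF assms(1)] by auto
  have v2: "m + 1 \<le> l" using valid_tup[OF assms(2)] by auto
  have D: "0 < 1/q - q" by (rule D0pos[OF q0 q1])
  have N: "q powr ((1 - 2*l) + (1 - (2*l+2))) \<le> qnum q (2*l) * qnum q (2*l + 2)"
  proof -
    have n1: "q powr (1 - 2*l) \<le> qnum q (2*l)" by (rule qn_low[OF q0 q1]) (use v in auto)
    have n2: "q powr (1 - (2*l+2)) \<le> qnum q (2*l+2)" by (rule qn_low[OF q0 q1]) (use v in auto)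
    have n3: "0 \<le> qnum q (2*l)" by (rule qn_nonneg[OF q0 q1]) (use v in auto)
    have "q powr (1 - 2*l) * q powr (1 - (2*l+2)) \<le> qnum q (2*l) * qnum q (2*l + 2)"
      using mult_mono[OF n1 n2 n3] by simp
    then show ?thesis using powr_add[of q "1 - 2*l" "1 - (2*l+2)"] by simp
  qed
  let ?Y = "q powr (m - 1/2) * sqrt (qnum q (l + m + 1) * qnum q (l - m)) / (qnum q (2*l) * qnum q (2*l + 2))"
  have "0 \<le> ?Y \<and> ?Y \<le> q powr ((m - 1/2) + (-((l+m+1)+(l-m))/2) - ((1 - 2*l) + (1 - (2*l+2)))) / (1/q - q)"
  proof (rule fracb)
    show "0 \<le> sqrt (qnum q (l + m + 1) * qnum q (l - m))" using sq_nonneg[OF q0 q1] v by simp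
    show "sqrt (qnum q (l + m + 1) * qnum q (l - m)) \<le> q powr (-((l+m+1)+(l-m))/2) / (1/q - q)"
      by (rule sq_up[OF q0 q1]) (use v in auto)
  qed (rule N, rule D)
  moreover have ex: "(m - 1/2) + (-((l+m+1)+(l-m))/2) - ((1 - 2*l) + (1 - (2*l+2))) = 3*l + m - 1"
    by (simp add: field_simps)
  ultimately have F: "0 \<le> ?Y \<and> ?Y \<le> q powr (3*l + m - 1) / (1/q - q)" by (simp only: ex)
  have A3e: "A3 q l m = (1 + q^2) * ?Y"
    unfolding A3_def by simp
  have "q powr (3*l + m - 1) \<le> q powr (2*l - 1)" using v q0 q1 by (intro powr_mono') auto
  then have "q powr (3*l + m - 1) / (1/q - q) \<le> q powr (2*l - 1) / (1/q - q)" using D by (intro divide_right_mono) auto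
  then have G: "0 \<le> ?Y \<and> ?Y \<le> q powr (2*l - 1) / (1/q - q)" using F by linarith
  have q2: "0 \<le> 1 + q^2" by simp
  have "0 \<le> (1 + q^2) * ?Y" using G q2 by (intro mult_nonneg_nonneg) auto
  then have "\<bar>A3 q l m\<bar> = (1 + q^2) * ?Y" unfolding A3e by (rule abs_of_nonneg)
  also have "\<dots> \<le> (1 + q^2) * (q powr (2*l - 1) / (1/q - q))" using G q2 by (intro mult_left_mono) auto
  finally show ?thesis by simp
qed

end

lemma valid_s: "valid (s,l,m) = valid (s',l,m)"
  unfolding valid_def by simp

context
  fixes q :: real
  assumes q0: "0 < q" and q1: "q < 1"
begin

lemma den_low: assumes "1/2 \<le> l" shows "q powr (-(4*l)) \<le> qnum q (2*l) * qnum q (2*l + 2)"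
proof -
  have n1: "q powr (1 - 2*l) \<le> qnum q (2*l)" by (rule qn_low[OF q0 q1]) (use assms in auto)
  have n2: "q powr (1 - (2*l+2)) \<le> qnum q (2*l+2)" by (rule qn_low[OF q0 q1]) (use assms in auto)
  have n3: "0 \<le> qnum q (2*l)" by (rule qn_nonneg[OF q0 q1]) (use assms in auto)
  have "q powr (1 - 2*l) * q powr (1 - (2*l+2)) \<le> qnum q (2*l) * qnum q (2*l + 2)"
    using mult_mono[OF n1 n2 n3] by simp
  then show ?thesis using powr_add[of q "1 - 2*l" "1 - (2*l+2)"] by simp
qed

lemma B1_bound: assumes "valid (s,l,m)" shows "\<bar>B1 q l m\<bar> \<le> 1 / (1/q - q)"
proof -
  have v: "1/2 \<le> l" "- l \<le> m" "m \<le> l" using valid_tup[OF assms] by auto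
  have D: "0 < 1/q - q" by (rule D0pos[OF q0 q1])
  have "0 \<le> B1 q l m \<and> B1 q l m \<le> q powr ((m + 1) + (-((l+m+1)+(l-m+1))/2) - (1 - (2*l+2))) / (1/q - q)"
    unfolding B1_def
  proof (rule fracb[OF q0 q1])
    show "0 \<le> sqrt (qnum q (l + m + 1) * qnum q (l - m + 1))" using sq_nonneg[OF q0 q1] v by simp
    show "sqrt (qnum q (l + m + 1) * qnum q (l - m + 1)) \<le> q powr (-((l+m+1)+(l-m+1))/2) / (1/q - q)"
      by (rule sq_up[OF q0 q1]) (use v in auto)
    show "q powr (1 - (2*l+2)) \<le> qnum q (2*l+2)" by (rule qn_low[OF q0 q1]) (use v in auto)
  qed (rule D)
  moreover have ex: "(m + 1) + (-((l+m+1)+(l-m+1))/2) - (1 - (2*l+2)) = m + l + 1" by (simp add: field_simps)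
  ultimately have F: "0 \<le> B1 q l m \<and> B1 q l m \<le> q powr (m + l + 1) / (1/q - q)" by (simp only: ex)
  have "q powr (m + l + 1) \<le> 1" using v q0 q1 by (intro powr_le1) auto
  then have "q powr (m + l + 1) / (1/q - q) \<le> 1 / (1/q - q)" using D by (intro divide_right_mono) auto
  then show ?thesis using F by linarith
qed

lemma B2_bound: assumes "valid (s,l,m)" shows "\<bar>B2 q l m\<bar> \<le> 1 / (1/q - q)"
proof -
  have v: "1/2 \<le> l" "- l \<le> m" "m \<le> l" using valid_tup[OF assms] by auto
  have D: "0 < 1/q - q" by (rule D0pos[OF q0 q1])
  have "0 \<le> B2 q l m \<and> B2 q l m \<le> q powr ((m + 1) + (-((l+m)+(l-m))/2) - (1 - 2*l)) / (1/q - q)"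
    unfolding B2_def
  proof (rule fracb[OF q0 q1])
    show "0 \<le> sqrt (qnum q (l + m) * qnum q (l - m))" using sq_nonneg[OF q0 q1] v by simp
    show "sqrt (qnum q (l + m) * qnum q (l - m)) \<le> q powr (-((l+m)+(l-m))/2) / (1/q - q)"
      by (rule sq_up[OF q0 q1]) (use v in auto)
    show "q powr (1 - 2*l) \<le> qnum q (2*l)" by (rule qn_low[OF q0 q1]) (use v in auto)
  qed (rule D)
  moreover have ex: "(m + 1) + (-((l+m)+(l-m))/2) - (1 - 2*l) = m + l" by (simp add: field_simps)
  ultimately have F: "0 \<le> B2 q l m \<and> B2 q l m \<le> q powr (m + l) / (1/q - q)" by (simp only: ex)
  have "q powr (m + l) \<le> 1" using v q0 q1 by (intro powr_le1) auto
  then have "q powr (m + l) / (1/q - q) \<le> 1 / (1/q - q)" using D by (intro divide_right_mono) auto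
  then show ?thesis using F by linarith
qed

lemma B3_bound: assumes "valid (s,l,m)"
  shows "\<bar>B3 q l m\<bar> \<le> (1 + q^2) / (1/q - q)^2 * q powr (2*l - 1)"
proof -
  have v: "1/2 \<le> l" "- l \<le> m" "m \<le> l" using valid_tup[OF assms] by auto
  have D: "0 < 1/q - q" by (rule D0pos[OF q0 q1])
  define W where "W = q powr (-(2*l+1)) / (1/q - q)^2"
  define P1 where "P1 = qnum q (l - m + 1) * qnum q (l + m)"
  define P2 where "P2 = qnum q (l - m) * qnum q (l + m + 1)"
  have P1b: "0 \<le> P1" "P1 \<le> W"
  proof -
    show "0 \<le> P1" unfolding P1_def using qn_nonneg[OF q0 q1] v by simp
    have "P1 \<le> q powr (-((l - m + 1) + (l + m))) / (1/q - q)^2" unfolding P1_def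
      by (rule qprod_up[OF q0 q1]) (use v in auto)
    also have "(l - m + 1) + (l + m) = 2*l + 1" by simp
    finally show "P1 \<le> W" unfolding W_def .
  qed
  have P2b: "0 \<le> P2" "P2 \<le> W"
  proof -
    show "0 \<le> P2" unfolding P2_def using qn_nonneg[OF q0 q1] v by simp
    have "P2 \<le> q powr (-((l - m) + (l + m + 1))) / (1/q - q)^2" unfolding P2_def
      by (rule qprod_up[OF q0 q1]) (use v in auto)
    also have "(l - m) + (l + m + 1) = 2*l + 1" by simp
    finally show "P2 \<le> W" unfolding W_def .
  qed
  have num: "\<bar>P1 - q^2 * P2\<bar> \<le> (1 + q^2) * W"
  proof -
    have "q^2 * P2 \<le> q^2 * W" using P2b by (intro mult_left_mono) auto
    moreover have "0 \<le> q^2 * P2" using P2b by simp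
    ultimately show ?thesis using P1b by (simp add: abs_le_iff algebra_simps)
  qed
  have dl: "q powr (-(4*l)) \<le> qnum q (2*l) * qnum q (2*l + 2)" by (rule den_low[OF v(1)])
  have dpos: "0 < q powr (-(4*l))" using q0 by simp
  have B3e: "B3 q l m = (P1 - q^2 * P2) / (qnum q (2*l) * qnum q (2*l + 2))"
    unfolding B3_def P1_def P2_def by (simp add: mult.assoc)
  have "\<bar>B3 q l m\<bar> = \<bar>P1 - q^2 * P2\<bar> / (qnum q (2*l) * qnum q (2*l + 2))"
  proof -
    have "0 < qnum q (2*l) * qnum q (2*l + 2)" using dl dpos by linarith
    then show ?thesis unfolding B3e abs_divide by simp
  qed
  also have "\<dots> \<le> ((1 + q^2) * W) / q powr (-(4*l))"
    by (rule frac_le) (use num dl dpos W_def in auto)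
  also have "\<dots> = (1 + q^2) / (1/q - q)^2 * (q powr (-(2*l+1)) / q powr (-(4*l)))"
    unfolding W_def by simp
  also have "q powr (-(2*l+1)) / q powr (-(4*l)) = q powr (2*l - 1)"
  proof -
    have "q powr (-(2*l+1)) / q powr (-(4*l)) = q powr (-(2*l+1) - (-(4*l)))" by (rule powr_diff[symmetric])
    also have "-(2*l+1) - (-(4*l)) = 2*l - 1" by simp
    finally show ?thesis .
  qed
  finally show ?thesis .
qed

lemma GG_piA: "GG (piA q)"
proof (rule generic_GG[where g = "gA q" and h = "hA q"])
  show "piA q (s',l',m') (s,l,m) = (if valid (s',l',m') \<and> valid (s,l,m) \<and> s' = s
      then complex_of_real (gA q l' m' l m + sgnb s * hA q l' m' l m) else 0)" for s' l' m' s l m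
    by (rule piA_form)
  show "gA q l' m' l m \<noteq> 0 \<Longrightarrow> \<bar>l' - l\<bar> \<le> 1 \<and> \<bar>m' - m\<bar> \<le> 1" for l' m' l m
    unfolding gA_def by (auto split: if_splits)
  show "hA q l' m' l m \<noteq> 0 \<Longrightarrow> l' = l \<and> \<bar>m' - m\<bar> \<le> 1" for l' m' l m
    unfolding hA_def by (auto split: if_splits)
  have D: "0 < 1/q - q" by (rule D0pos[OF q0 q1])
  have lq: "0 < - ln q" using q0 q1 by simp
  have Ch0: "0 \<le> (1 + q^2) / (1/q - q) * (q powr (-2) / (- ln q))"
    using D lq by (intro mult_nonneg_nonneg divide_nonneg_pos) auto
  show "\<bar>gA q l' m' l m\<bar> \<le> q powr (-1) / (1/q - q) + 1 / (1/q - q)"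
    if v: "valid (s',l',m')" "valid (s,l,m)" for s' l' m' s l m
  proof -
    have p1: "0 \<le> q powr (-1) / (1/q - q)" using D by simp
    have p2: "0 \<le> 1 / (1/q - q)" using D by simp
    show ?thesis
    proof (cases "l' = l + 1 \<and> m' = m + 1")
      case True
      then have "\<bar>gA q l' m' l m\<bar> = \<bar>A1 q l m\<bar>" unfolding gA_def by simp
      then show ?thesis using A1_bound[OF q0 q1 v(2)] p2 by linarith
    next
      case c1: False
      show ?thesis
      proof (cases "l' = l - 1 \<and> m' = m + 1")
        case True
        have "valid (s, l - 1, m + 1)" using v(1) True valid_s by auto
        have "\<bar>gA q l' m' l m\<bar> = \<bar>A2 q l m\<bar>" unfolding gA_def using c1 True by simp
        then show ?thesis using A2_bound[OF q0 q1 v(2) \<open>valid (s, l - 1, m + 1)\<close>] p1 by linarith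
      next
        case False
        then have "gA q l' m' l m = 0" unfolding gA_def using c1 by auto
        then show ?thesis using p1 p2 by simp
      qed
    qed
  qed
  show "(l + 1/2) * \<bar>hA q l' m' l m\<bar> \<le> (1 + q^2) / (1/q - q) * (q powr (-2) / (- ln q))"
    if v: "valid (s',l',m')" "valid (s,l,m)" for s' l' m' s l m
  proof (cases "l' = l \<and> m' = m + 1")
    case True
    have "valid (s, l, m + 1)" using v(1) True valid_s by auto
    then have b: "\<bar>A3 q l m\<bar> \<le> (1 + q^2) / (1/q - q) * q powr (2*l - 1)" using A3_bound[OF q0 q1 v(2)] by blast
    have l0: "1/2 \<le> l" using valid_tup[OF v(2)] by simp
    have "(l + 1/2) * \<bar>A3 q l m\<bar> \<le> (l + 1/2) * ((1 + q^2) / (1/q - q) * q powr (2*l - 1))"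
      using b l0 by (intro mult_left_mono) auto
    also have "\<dots> = (1 + q^2) / (1/q - q) * ((l + 1/2) * q powr (2*l - 1))" by simp
    also have "\<dots> \<le> (1 + q^2) / (1/q - q) * (q powr (-2) / (- ln q))"
      using lq_bound[OF q0 q1 l0] D by (intro mult_left_mono) auto
    finally show ?thesis unfolding hA_def using True by simp
  next
    case False
    then have "hA q l' m' l m = 0" unfolding hA_def by auto
    then show ?thesis using Ch0 by simp
  qed
  show "0 \<le> q powr (-1) / (1/q - q) + 1 / (1/q - q)" using D0pos[OF q0 q1] by simp
  show "0 \<le> (1 + q^2) / (1/q - q) * (q powr (-2) / (- ln q))" by (rule Ch0)
qed

lemma GG_piB: "GG (piB q)"
proof (rule generic_GG[where g = "gB q" and h = "hB q"])
  show "piB q (s',l',m') (s,l,m) = (if valid (s',l',m') \<and> valid (s,l,m) \<and> s' = s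
      then complex_of_real (gB q l' m' l m + sgnb s * hB q l' m' l m) else 0)" for s' l' m' s l m
    by (rule piB_form)
  show "gB q l' m' l m \<noteq> 0 \<Longrightarrow> \<bar>l' - l\<bar> \<le> 1 \<and> \<bar>m' - m\<bar> \<le> 1" for l' m' l m
    unfolding gB_def by (auto split: if_splits)
  show "hB q l' m' l m \<noteq> 0 \<Longrightarrow> l' = l \<and> \<bar>m' - m\<bar> \<le> 1" for l' m' l m
    unfolding hB_def by (auto split: if_splits)
  have D: "0 < 1/q - q" by (rule D0pos[OF q0 q1])
  have lq: "0 < - ln q" using q0 q1 by simp
  have Ch0: "0 \<le> (1 + q^2) / (1/q - q)^2 * (q powr (-2) / (- ln q))"
    using D lq by (intro mult_nonneg_nonneg divide_nonneg_pos) auto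
  show "\<bar>gB q l' m' l m\<bar> \<le> 2 / (1/q - q)"
    if v: "valid (s',l',m')" "valid (s,l,m)" for s' l' m' s l m
  proof -
    have p2: "1 / (1/q - q) \<le> 2 / (1/q - q)" using D by (simp add: divide_right_mono)
    have p0: "0 \<le> 2 / (1/q - q)" using D by simp
    show ?thesis unfolding gB_def using B1_bound[OF v(2)] B2_bound[OF v(2)] p2 p0
      by (auto split: if_splits)
  qed
  show "(l + 1/2) * \<bar>hB q l' m' l m\<bar> \<le> (1 + q^2) / (1/q - q)^2 * (q powr (-2) / (- ln q))"
    if v: "valid (s',l',m')" "valid (s,l,m)" for s' l' m' s l m
  proof (cases "m' = m \<and> l' = l")
    case True
    have b: "\<bar>B3 q l m\<bar> \<le> (1 + q^2) / (1/q - q)^2 * q powr (2*l - 1)" using B3_bound[OF v(2)] by blast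
    have l0: "1/2 \<le> l" using valid_tup[OF v(2)] by simp
    have "(l + 1/2) * \<bar>B3 q l m\<bar> \<le> (l + 1/2) * ((1 + q^2) / (1/q - q)^2 * q powr (2*l - 1))"
      using b l0 by (intro mult_left_mono) auto
    also have "\<dots> = (1 + q^2) / (1/q - q)^2 * ((l + 1/2) * q powr (2*l - 1))" by simp
    also have "\<dots> \<le> (1 + q^2) / (1/q - q)^2 * (q powr (-2) / (- ln q))"
      using lq_bound[OF q0 q1 l0] D by (intro mult_left_mono) auto
    finally show ?thesis unfolding hB_def using True by simp
  next
    case False
    then have "hB q l' m' l m = 0" unfolding hB_def by auto
    then show ?thesis using Ch0 by simp
  qed
  show "0 \<le> 2 / (1/q - q)" using D0pos[OF q0 q1] by simp
  show "0 \<le> (1 + q^2) / (1/q - q)^2 * (q powr (-2) / (- ln q))" by (rule Ch0)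
qed

end

definition Sset :: "nat \<Rightarrow> real set" where
  "Sset n = {t. 0 \<le> t \<and> finite {i. valid i \<and> invabsD_diag i > t}
                                   \<and> card {i. valid i \<and> invabsD_diag i > t} \<le> n}"

lemma sv_eq: "sing_val_invabsD n = Inf (Sset n)"
  unfolding sing_val_invabsD_def Sset_def ..

lemma Sset_bdd: "bdd_below (Sset n)"
  unfolding Sset_def by (rule bdd_belowI[of _ 0]) auto

lemma upper_set:
  fixes K :: nat
  shows "{i. valid i \<and> invabsD_diag i > 1 / (real K + 1)} \<subseteq>
     (\<lambda>(s,a,b). (s, real a + 1/2, real a + 1/2 - real b)) ` (UNIV \<times> {0..<K} \<times> {0..<2*K})"
proof
  fix i :: idx assume "i \<in> {i. valid i \<and> invabsD_diag i > 1 / (real K + 1)}"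
  then have vi: "valid i" and gt: "invabsD_diag i > 1 / (real K + 1)" by auto
  obtain s l m where i: "i = (s,l,m)" by (cases i) auto
  obtain n :: nat where n: "l = real n + 1/2" using valid_l[OF vi] unfolding i lv_def by auto
  obtain k :: int where k: "m = l - of_int k" using valid_lm[OF vi] unfolding i lv_def mv_def by auto
  have b: "- l \<le> m" "m \<le> l" using valid_bounds[OF vi] unfolding i lv_def mv_def by auto
  have "1 / (real n + 1) > 1 / (real K + 1)" using gt unfolding i invabsD_diag_def n by (simp add: add.assoc)
  then have "real n + 1 < real K + 1"
  proof (rule contrapos_pp)
    assume "\<not> real n + 1 < real K + 1"
    then have "real K + 1 \<le> real n + 1" by simp
    then have "1 / (real n + 1) \<le> 1 / (real K + 1)" by (intro frac_le) auto
    then show "\<not> 1 / (real K + 1) < 1 / (real n + 1)" by simp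
  qed
  then have nK: "n < K" by simp
  have k0: "0 \<le> k" using b(2) k by simp
  have k1: "of_int k \<le> 2 * real n + 1" using b(1) k n by simp
  then have "k \<le> 2 * int n + 1" by linarith
  then have k2: "nat k < 2 * K" using nK k0 by linarith
  have "i = (\<lambda>(s,a,b). (s, real a + 1/2, real a + 1/2 - real b)) (s, n, nat k)"
    unfolding i using n k k0 by simp
  moreover have "(s, n, nat k) \<in> UNIV \<times> {0..<K} \<times> {0..<2*K}" using nK k2 by simp
  ultimately show "i \<in> (\<lambda>(s,a,b). (s, real a + 1/2, real a + 1/2 - real b)) ` (UNIV \<times> {0..<K} \<times> {0..<2*K})"
    by blast
qed

lemma card_box: "card (UNIV \<times> {0..<K} \<times> {0..<2*K} :: (bool \<times> nat \<times> nat) set) = 4 * K^2"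
  by (simp add: card_cartesian_product power2_eq_square)

lemma in_Sset_upper:
  fixes K n :: nat
  assumes "4 * K^2 \<le> n"
  shows "1 / (real K + 1) \<in> Sset n"
proof -
  let ?E = "{i. valid i \<and> invabsD_diag i > 1 / (real K + 1)}"
  let ?B = "UNIV \<times> {0..<K} \<times> {0..<2*K} :: (bool \<times> nat \<times> nat) set"
  have fB: "finite ?B" by simp
  have sub: "?E \<subseteq> (\<lambda>(s,a,b). (s, real a + 1/2, real a + 1/2 - real b)) ` ?B" by (rule upper_set)
  have fin: "finite ?E" using finite_subset[OF sub] fB by blast
  have "card ?E \<le> card ((\<lambda>(s,a,b). (s, real a + 1/2, real a + 1/2 - real b)) ` ?B)"
    by (rule card_mono[OF _ sub]) (use fB in simp)
  also have "\<dots> \<le> card ?B" by (rule card_image_le[OF fB])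
  also have "\<dots> \<le> n" using card_box assms by simp
  finally show ?thesis unfolding Sset_def using fin by simp
qed

lemma lower_set:
  fixes K :: nat and t :: real
  assumes "\<And>a b. a < K \<Longrightarrow> b < K \<Longrightarrow> 1 / (real (a + b) + 1) > t"
  shows "(\<lambda>(s,a,b). (s, real (a+b) + 1/2, real a + 1/2)) ` (UNIV \<times> {0..<K} \<times> {0..<K})
      \<subseteq> {i. valid i \<and> invabsD_diag i > t}"
proof
  fix i :: idx assume "i \<in> (\<lambda>(s,a,b). (s, real (a+b) + 1/2, real a + 1/2)) ` (UNIV \<times> {0..<K} \<times> {0..<K})"
  then obtain s a b where ab: "a < K" "b < K" and i: "i = ((s::bool), real (a+b) + 1/2, real a + 1/2)" by auto
  have c1: "\<exists>n::nat. real (a+b) + 1/2 = real n + 1/2" by blast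
  have c2: "\<exists>k::int. real a + 1/2 = (real (a+b) + 1/2) - of_int k" by (rule exI[of _ "int b"]) simp
  have c3: "-(real (a+b) + 1/2) \<le> real a + 1/2" "real a + 1/2 \<le> real (a+b) + 1/2" by simp_all
  have "valid i" unfolding valid_def i prod.case using c1 c2 c3 by blast
  moreover have "invabsD_diag i > t" using assms[OF ab] unfolding i invabsD_diag_def by (simp add: add.assoc)
  ultimately show "i \<in> {i. valid i \<and> invabsD_diag i > t}" by simp
qed

lemma inj_lower: "inj_on (\<lambda>(s,a,b). (s, real (a+b) + 1/2, real a + 1/2)) (UNIV \<times> {0..<K} \<times> {0..<(K::nat)})"
  by (rule inj_onI) auto

lemma Sset_lower:
  fixes n :: nat
  assumes n1: "1 \<le> n" and t: "t \<in> Sset n"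
  shows "1 / (4 * sqrt n) \<le> t"
proof (rule ccontr)
  assume "\<not> 1 / (4 * sqrt n) \<le> t"
  then have tl: "t < 1 / (4 * sqrt n)" by simp
  have sn: "1 \<le> sqrt n" using n1 by simp
  define K where "K = nat \<lceil>sqrt n\<rceil>"
  have K1: "sqrt n \<le> real K" unfolding K_def by linarith
  have K2: "real K \<le> sqrt n + 1" unfolding K_def using sn by linarith
  have cond: "1 / (real (a + b) + 1) > t" if "a < K" "b < K" for a b
  proof -
    have "real (a + b) + 1 \<le> 2 * real K - 1" using that by linarith
    also have "\<dots> < 4 * sqrt n" using K2 sn by linarith
    finally have w: "real (a + b) + 1 < 4 * sqrt n" .
    have "1 / (4 * sqrt n) < 1 / (real (a + b) + 1)"
      by (rule frac_less2) (use w in auto)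
    then show ?thesis using tl by linarith
  qed
  let ?E = "{i. valid i \<and> invabsD_diag i > t}"
  let ?B = "UNIV \<times> {0..<K} \<times> {0..<K} :: (bool \<times> nat \<times> nat) set"
  have sub: "(\<lambda>(s,a,b). (s, real (a+b) + 1/2, real a + 1/2)) ` ?B \<subseteq> ?E" by (rule lower_set) (rule cond)
  have fin: "finite ?E" and cn: "card ?E \<le> n" using t unfolding Sset_def by auto
  have "card ?B = card ((\<lambda>(s,a,b). (s, real (a+b) + 1/2, real a + 1/2)) ` ?B)"
    by (rule card_image[OF inj_lower, symmetric])
  also have "\<dots> \<le> card ?E" by (rule card_mono[OF fin sub])
  finally have "card ?B \<le> n" using cn by linarith
  moreover have "card ?B = 2 * (K * K)" by (simp add: card_cartesian_product)
  moreover have "n \<le> K * K"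
  proof -
    have "sqrt n * sqrt n \<le> real K * real K" using K1 sn by (intro mult_mono) auto
    then have "real n \<le> real (K * K)" by simp
    then show ?thesis by (simp only: of_nat_le_iff)
  qed
  ultimately show False using n1 by linarith
qed

lemma sv_lower: assumes "1 \<le> n" shows "1 / (4 * sqrt n) \<le> sing_val_invabsD n"
proof -
  have "Sset n \<noteq> {}" using in_Sset_upper[of 0 n] by auto
  then show ?thesis unfolding sv_eq using Sset_lower[OF assms] by (intro cInf_greatest) auto
qed

lemma sv_upper: assumes "1 \<le> n" shows "sing_val_invabsD n \<le> 2 / sqrt n"
proof -
  define K where "K = nat \<lfloor>sqrt n / 2\<rfloor>"
  have K1: "real K \<le> sqrt n / 2" unfolding K_def by (simp add: floor_le_iff) linarith
  have K2: "sqrt n / 2 < real K + 1" unfolding K_def by linarith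
  have "4 * (real K)^2 \<le> n"
  proof -
    have "real K * real K \<le> (sqrt n / 2) * (sqrt n / 2)" using K1 by (intro mult_mono) auto
    then show ?thesis by (simp add: power2_eq_square)
  qed
  then have "4 * K^2 \<le> n" by (metis of_nat_le_iff of_nat_mult of_nat_numeral of_nat_power)
  then have mem: "1 / (real K + 1) \<in> Sset n" by (rule in_Sset_upper)
  have "sing_val_invabsD n \<le> 1 / (real K + 1)" unfolding sv_eq by (rule cInf_lower[OF mem Sset_bdd])
  also have "\<dots> \<le> 2 / sqrt n"
  proof -
    have "0 < sqrt n" using assms by simp
    then show ?thesis using K2 by (simp add: field_simps)
  qed
  finally show ?thesis .
qed

lemma sv_nonneg: "0 \<le> sing_val_invabsD n"
proof -
  have "Sset n \<noteq> {}" using in_Sset_upper[of 0 n] by auto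
  then show ?thesis unfolding sv_eq by (intro cInf_greatest) (auto simp: Sset_def)
qed

lemma powr_mhalf: assumes "1 \<le> n" shows "real n powr (- 1 / 2) = 1 / sqrt (real n)"
proof -
  have "real n powr (- 1 / 2) = real n powr (- (1/2))" by simp
  also have "\<dots> = 1 / (real n powr (1/2))" by (rule powr_minus_divide)
  also have "real n powr (1/2) = sqrt (real n)" by (rule powr_half_sqrt) simp
  finally show ?thesis .
qed

lemma hermitian_D: "hermitian Dmat"
  unfolding hermitian_def
proof (intro allI)
  fix i j :: idx
  show "Dmat i j = cnj (Dmat j i)"
  proof (cases "j = flip i")
    case True
    then have "i = flip j" by (simp add: flip_eq)
    then show ?thesis unfolding Dmat_eq using True by simp
  next
    case False
    then have "i \<noteq> flip j" by (simp add: flip_eq)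
    then show ?thesis unfolding Dmat_eq using False by simp
  qed
qed

lemma sv_tendsto: "sing_val_invabsD \<longlonglongrightarrow> 0"
proof (rule tendsto_sandwich[of "\<lambda>_. 0" _ _ "\<lambda>n. 2 / sqrt (real n)"])
  show "\<forall>\<^sub>F n in sequentially. 0 \<le> sing_val_invabsD n" by (simp add: sv_nonneg)
  show "\<forall>\<^sub>F n in sequentially. sing_val_invabsD n \<le> 2 / sqrt (real n)"
    using eventually_ge_at_top[of 1] by eventually_elim (rule sv_upper)
  show "(\<lambda>n. 0) \<longlonglongrightarrow> (0::real)" by simp
  have "filterlim (\<lambda>n. sqrt (real n)) at_top sequentially"
    by (rule filterlim_compose[OF sqrt_at_top filterlim_real_sequentially])
  then have "filterlim (\<lambda>n. sqrt (real n)) at_infinity sequentially"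
    by (rule filterlim_at_top_imp_at_infinity)
  then show "(\<lambda>n. 2 / sqrt (real n)) \<longlonglongrightarrow> 0"
    by (rule tendsto_divide_0[OF tendsto_const])
qed

lemma metric_dim2: "metric_dimension 2"
proof -
  have H: "\<forall>n::nat. n \<ge> 1 \<longrightarrow> (1/4) * real n powr (- 1 / 2) \<le> sing_val_invabsD n
       \<and> sing_val_invabsD n \<le> 2 * real n powr (- 1 / 2)"
  proof (intro allI impI conjI)
    fix n :: nat assume n: "1 \<le> n"
    have s: "0 < sqrt (real n)" using n by simp
    show "1/4 * real n powr (- 1 / 2) \<le> sing_val_invabsD n"
      unfolding powr_mhalf[OF n] using sv_lower[OF n] s by (simp add: field_simps)
    show "sing_val_invabsD n \<le> 2 * real n powr (- 1 / 2)"
      unfolding powr_mhalf[OF n] using sv_upper[OF n] s by (simp add: field_simps)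
  qed
  have c: "(0::real) < 1/4" "(0::real) < 2" by simp_all
  show ?thesis unfolding metric_dimension_def using H c by blast
qed

theorem mainTheorem7:
  fixes q :: real
  assumes "0 < q" and "q < 1"
  shows "(\<forall>T \<in> Balg q. mbounded T) \<and> spectral_triple q \<and> regular q \<and> metric_dimension 2"
proof -
  have gens: "GG T" if "T \<in> {piA q, madj (piA q), piB q}" for T
    using that GG_piA[OF assms] GG_piB[OF assms] GG_madj[OF GG_piA[OF assms]] by auto
  have piGG: "GG T" if "T \<in> piAlg q" for T
  proof -
    have "T \<in> alg_gen {piA q, madj (piA q), piB q}" using that unfolding piAlg_def .
    then show ?thesis using alg_gen_GG[of "{piA q, madj (piA q), piB q}"] gens by blast
  qed
  have commGood: "good T" if cT: "T \<in> commD q" for T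
  proof -
    obtain T' where "T = mcomm Dmat T'" "T' \<in> piAlg q" using cT unfolding commD_def by blast
    then show ?thesis using piGG[of T'] unfolding GG_def by simp
  qed
  have allGood: "good T" if "T \<in> piAlg q \<union> commD q" for T
    using that piGG commGood unfolding GG_def by blast
  have B: "\<forall>T \<in> Balg q. mbounded T"
  proof
    fix T assume "T \<in> Balg q"
    then have "T \<in> alg_gen ((piAlg q \<union> commD q) \<union> madj ` (piAlg q \<union> commD q))"
      unfolding Balg_def star_alg_gen_def .
    then have "good T"
    proof (rule alg_gen_good[rotated])
      fix S assume "S \<in> (piAlg q \<union> commD q) \<union> madj ` (piAlg q \<union> commD q)"
      then show "good S" using allGood good_madj by blast
    qed
    then show "mbounded T" by (rule good_bounded)
  qed
  have ST: "spectral_triple q"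
    unfolding spectral_triple_def
  proof (intro conjI ballI)
    show "mbounded T" if "T \<in> piAlg q" for T
      using piGG[OF that] good_bounded unfolding GG_def by blast
    show "hermitian Dmat" by (rule hermitian_D)
    show "sing_val_invabsD \<longlonglongrightarrow> 0" by (rule sv_tendsto)
    show "mbounded (mcomm Dmat T)" if "T \<in> piAlg q" for T
      using piGG[OF that] good_bounded unfolding GG_def by blast
  qed
  have R: "regular q"
    unfolding regular_def in_dom_delta_pow_def
    using allGood good_delta_pow good_bounded by blast
  show ?thesis using B ST R metric_dim2 by blast
qed

end
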